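(* Fix integers $n\ge 1$, $p\ge 3$ and a node $i\in\{1,\dots,p\}$. Let $\mathbf X_{-i}\in\mathbb R^{n\times(p-1)}$ be a random design matrix and $\mathbf X_i\in\mathbb R^n$ a response satisfying the nodewise Gaussian regression model \[ \mathbf X_i=\mathbf X_{-i}\beta_i^\star+\varepsilon_i,\qquad \varepsilon_i\sim\mathcal N(0,\sigma_i^2 I_n), \] with $\varepsilon_i$ independent of $\mathbf X_{-i}$, where $\beta_i^\star\in\mathbb R^{p-1}$ (coordinates indexed by $j\neq i$) is the true coefficient vector, and $K_{ii}>0$ is a known fixed constant with $\sigma_i^2=1/K_{ii}$. Let $\xi_0>0$ and $\sigma_1>0$ be hyperparameters, and let $(p_{ij})_{j\neq i}\subset[0,1]$ be deterministic weights (treated as fixed). Define the nodewise adaptive elastic-net estimator \[ \widehat\beta_i\in\arg\min_{\beta\in\mathbb R^{p-1}}\Big\{\frac{1}{2\sigma_i^2}\|\mathbf X_i-\mathbf X_{-i}\beta\|_2^2+\sum_{j\neq i}P_{1,ij}|\beta_{j}|+\sum_{j\neq i}P_{2,ij}\beta_{j}^2\Big\}, \] with $P_{1,ij}=\xi_0(1-p_{ij})|K_{ii}|$ and $P_{2,ij}=\frac{1}{2\sigma_1^2}p_{ij}K_{ii}^2$. Let $S_i=\{j\neq i:\beta^\star_{ij}\neq 0\}$, $s_i=|S_i|$, $\overline p_i=\max_{j\in S_i^c}p_{ij}$, $\underline p_i=\min_{j\in S_i}p_{ij}$. Assume: (A1) (Sub-Gaussian design) The rows of $\mathbf X_{-i}$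 are independent copies of a centered random vector in $\mathbb R^{p-1}$ with covariance matrix $\Sigma_{-i,-i}$; there is a constant $\sigma_X>0$, uniform in $n,p$, such that for every unit vector $v\in\mathbb R^{p-1}$ and every $t\in\mathbb R$, $\mathbb E[\exp(t\langle \mathbf X^{(1)}_{-i},v\rangle)]\le\exp(t^2\sigma_X^2/2)$, where $\mathbf X^{(1)}_{-i}$ is a generic row; and $0<\underline\kappa\le\lambda_{\min}(\Sigma_{-i,-i})\le\lambda_{\max}(\Sigma_{-i,-i})\le\overline\kappa<\infty$. (A2) (Sparsity and bounded signal) $\beta_i^\star$ is sparse with support $S_i$ and $\max_{j\in S_i}|\beta^\star_{ij}|\le B$ for a constant $B>0$ uniform in $n,p$. (A3) (Separation of weights) $\overline p_i<1/2$. (A4) (Compatibility) With $L_i=\frac{5-2\underline p_i}{1-2\overline p_i}$, there is a constant $\phi_i>0$, uniform in $n,p$, such that for every $\delta\in\mathbb R^{p-1}$ with $\|\delta_{S_i^c}\|_1\le L_i\|\delta_{S_i}\|_1$, \[ \|\mathbf X_{-i}\delta\|_2^2\ge\frac{n\phi_i^2}{s_i}\|\delta_{S_i}\|_1^2. \] Then there exist constants $C>0$ (sufficiently large) and $c>0$ such that, provided \[ \xi_0\ge C\sqrt{n\log p}\quad\text{and}\quad \xi_0\ge\frac{BK_{ii}}{\sigma_1^2}, \] with probability at least $1-2p^{-c}$ (conditionally on the fixed weights $(p_{ij})$), \[ \|\widehat\beta_i-\beta_i^\star\|_1\le C_i\,\frac{s_i\,\xi_0}{n}, \] where $C_i>0$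 depends only on $\phi_i$, $\underline p_i$ and $\overline p_i$.
   Context: This arises in a Gaussian graphical model: $X\sim\mathcal N(0,\Sigma)$ in $\mathbb R^p$ with precision matrix $K=\Sigma^{-1}$, $n$ i.i.d. observations forming $\mathbf X\in\mathbb R^{n\times p}$; $\mathbf X_i$ denotes the $i$th column and $\mathbf X_{-i}$ the matrix with that column removed. The regression coefficients are $\beta_i^\star=-K_{-i,i}/K_{ii}$ and $\sigma_i^2=1/K_{ii}$. The weights $p_{ij}$ are (variational) posterior edge-inclusion probabilities, fixed from a preceding step and treated as deterministic. $\delta_S$ denotes the restriction of a vector $\delta$ to coordinates in $S$, and $S^c$ the complement of $S$ within $\{j: j\neq i\}$. $\xi_0$ is the rate of a Laplace spike and $\sigma_1^2$ the variance of a Gaussian slab in a spike-and-slab prior. *)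

theory Defs
  imports "HOL-Probability.Probability"
begin

text \<open>Coordinates of vectors in R^(p-1) are indexed by J = {0..<p} - {i} (0-based nodes);
  vectors are functions nat => real and only their values on J matter.
  The data matrix is Xm :: nat => nat => real, entry (row r, column j).\<close>

definition other_idx :: "nat \<Rightarrow> nat \<Rightarrow> nat set" where
  "other_idx p i = {..<p} - {i}"

definition is_eigenvalue_on :: "nat set \<Rightarrow> (nat \<Rightarrow> nat \<Rightarrow> real) \<Rightarrow> real \<Rightarrow> bool" where
  "is_eigenvalue_on J A lam \<longleftrightarrow>
     (\<exists>v. (\<exists>j\<in>J. v j \<noteq> 0) \<and> (\<forall>j\<in>J. (\<Sum>k\<in>J. A j k * v k) = lam * v j))"

definition enet_obj ::
  "nat \<Rightarrow> nat \<Rightarrow> nat \<Rightarrow> real \<Rightarrow> real \<Rightarrow> real \<Rightarrow> (nat \<Rightarrow> real) \<Rightarrow> (nat \<Rightarrow> nat \<Rightarrow> real) \<Rightarrow> (nat \<Rightarrow> real) \<Rightarrow> real"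
  where
  "enet_obj n p i Kii xi0 sigma1 pw Xm \<beta> =
     1 / (2 * (1 / Kii)) * (\<Sum>r<n. (Xm r i - (\<Sum>j\<in>other_idx p i. Xm r j * \<beta> j))\<^sup>2)
     + (\<Sum>j\<in>other_idx p i. xi0 * (1 - pw j) * \<bar>Kii\<bar> * \<bar>\<beta> j\<bar>)
     + (\<Sum>j\<in>other_idx p i. (1 / (2 * sigma1\<^sup>2)) * pw j * Kii\<^sup>2 * (\<beta> j)\<^sup>2)"

definition is_enet_estimator ::
  "nat \<Rightarrow> nat \<Rightarrow> nat \<Rightarrow> real \<Rightarrow> real \<Rightarrow> real \<Rightarrow> (nat \<Rightarrow> real) \<Rightarrow> (nat \<Rightarrow> nat \<Rightarrow> real) \<Rightarrow> (nat \<Rightarrow> real) \<Rightarrow> bool"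
  where
  "is_enet_estimator n p i Kii xi0 sigma1 pw Xm \<beta> \<longleftrightarrow>
     (\<forall>\<beta>'. enet_obj n p i Kii xi0 sigma1 pw Xm \<beta> \<le> enet_obj n p i Kii xi0 sigma1 pw Xm \<beta>')"

definition supp_set :: "nat \<Rightarrow> nat \<Rightarrow> (nat \<Rightarrow> real) \<Rightarrow> nat set" where
  "supp_set p i \<beta> = {j \<in> other_idx p i. \<beta> j \<noteq> 0}"

definition pbar :: "nat \<Rightarrow> nat \<Rightarrow> (nat \<Rightarrow> real) \<Rightarrow> (nat \<Rightarrow> real) \<Rightarrow> real" where
  "pbar p i \<beta> pw = (if other_idx p i - supp_set p i \<beta> = {} then 0
                      else Max (pw ` (other_idx p i - supp_set p i \<beta>)))"

definition plow :: "nat \<Rightarrow> nat \<Rightarrow> (nat \<Rightarrow> real) \<Rightarrow> (nat \<Rightarrow> real) \<Rightarrow> real" where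
  "plow p i \<beta> pw = Min (pw ` supp_set p i \<beta>)"

end

theory Submission
  imports Defs "HOL-Probability.Probability"
begin



definition FF :: "real \<Rightarrow> real \<Rightarrow> real \<Rightarrow> real" where
  "FF a b d = (1 + \<bar>(5 - 2 * b) / (1 - 2 * d)\<bar>) * (3 + 8 / a\<^sup>2) + 4"

lemma FF_pos: "FF a b d > 0"
  unfolding FF_def by (intro add_nonneg_pos mult_nonneg_nonneg) auto

lemma DS_bound_A:
  fixes Q DS \<xi> n s \<phi> :: real
  assumes "Q \<le> 3 * \<xi> * DS" "Q \<ge> n * \<phi>\<^sup>2 / s * DS\<^sup>2" "DS \<ge> 0" "n > 0" "s > 0" "\<phi> > 0" "\<xi> > 0"
  shows "DS \<le> 3 * s * \<xi> / (n * \<phi>\<^sup>2)"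
proof (cases "DS = 0")
  case True then show ?thesis using assms by auto
next
  case False
  then have "DS > 0" using assms by auto
  have "n * \<phi>\<^sup>2 / s * DS\<^sup>2 \<le> 3 * \<xi> * DS" using assms by linarith
  then have "(n * \<phi>\<^sup>2 / s * DS) * DS \<le> (3 * \<xi>) * DS" by (simp add: power2_eq_square mult.assoc)
  then have "n * \<phi>\<^sup>2 / s * DS \<le> 3 * \<xi>" using \<open>DS > 0\<close> mult_le_cancel_right_pos by blast
  then have "n * \<phi>\<^sup>2 * DS \<le> 3 * \<xi> * s" using assms by (simp add: field_simps)
  then show ?thesis using assms by (simp add: field_simps)
qed

lemma final_A:
  fixes Q W DS Dc \<xi> pu pl \<phi> n s :: real
  assumes "Q \<ge> 0" "Q / 2 \<le> W + \<xi> * DS - \<xi> * (1 - pu) * Dc" "W \<le> \<xi> / 2 * (DS + Dc)"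
    "DS \<ge> 0" "Dc \<ge> 0" "pu < 1/2" "pl \<le> 1"
    "Dc \<le> (5 - 2 * pl) / (1 - 2 * pu) * DS \<Longrightarrow> Q \<ge> n * \<phi>\<^sup>2 / s * DS\<^sup>2"
    "n > 0" "s \<ge> 1" "\<phi> > 0" "\<xi> > 0"
  shows "DS + Dc \<le> FF \<phi> pl pu * s * \<xi> / n"
proof -
  define L where "L = (5 - 2 * pl) / (1 - 2 * pu)"
  have h1: "Dc * (1 - 2 * pu) \<le> 3 * DS"
  proof -
    have "\<xi> * (Dc * (1 - 2 * pu)) \<le> \<xi> * (3 * DS)" using assms by (simp add: algebra_simps)
    then show ?thesis using assms by simp
  qed
  have "3 * DS \<le> (5 - 2 * pl) * DS" using assms by (intro mult_right_mono) auto
  then have "Dc * (1 - 2 * pu) \<le> (5 - 2 * pl) * DS" using h1 by linarith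
  then have cone: "Dc \<le> L * DS" unfolding L_def using assms by (simp add: field_simps)
  then have Qb: "Q \<ge> n * \<phi>\<^sup>2 / s * DS\<^sup>2" using assms L_def by auto
  have e1: "\<xi> * (1 - pu) * Dc = \<xi>/2*Dc + \<xi>*(1/2-pu)*Dc" "\<xi> / 2 * (DS + Dc) = \<xi>/2*DS + \<xi>/2*Dc"
    by (simp_all add: algebra_simps)
  have "\<xi>*(1/2-pu)*Dc \<ge> 0" using assms by simp
  then have "Q \<le> 3 * \<xi> * DS" using assms(2,3) e1 by linarith
  then have DSb: "DS \<le> 3 * s * \<xi> / (n * \<phi>\<^sup>2)" using DS_bound_A[OF _ Qb] assms by auto
  have Lpos: "L > 0" unfolding L_def using assms by auto
  have "DS + Dc \<le> (1 + L) * DS" using cone by (simp add: algebra_simps)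
  also have "\<dots> \<le> (1 + L) * (3 * s * \<xi> / (n * \<phi>\<^sup>2))" using DSb Lpos by (intro mult_left_mono) auto
  also have "\<dots> = (1 + L) * (3 / \<phi>\<^sup>2) * (s * \<xi> / n)" using assms by (simp add: field_simps)
  also have "\<dots> \<le> FF \<phi> pl pu * (s * \<xi> / n)"
  proof (intro mult_right_mono)
    have "(1 + L) * (3 / \<phi>\<^sup>2) \<le> (1 + L) * (3 + 8 / \<phi>\<^sup>2)"
    proof (intro mult_left_mono)
      have "3 / \<phi>\<^sup>2 \<le> 8 / \<phi>\<^sup>2" using assms by (simp add: divide_right_mono)
      moreover have "8 / \<phi>\<^sup>2 \<ge> 0" by simp
      ultimately show "3 / \<phi>\<^sup>2 \<le> 3 + 8 / \<phi>\<^sup>2" by linarith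
    qed (use Lpos in auto)
    then show "(1 + L) * (3 / \<phi>\<^sup>2) \<le> FF \<phi> pl pu" unfolding FF_def L_def[symmetric] using Lpos by simp
  qed (use assms in auto)
  finally show ?thesis by simp
qed

lemma final_B:
  fixes Q W DS Dc \<xi> pu pl \<phi> n s e :: real
  assumes "Q \<ge> 0" "Q / 2 \<le> W + \<xi> * DS - \<xi> * (1 - pu) * Dc" "W \<le> Q / 4 + e"
    "e \<le> \<xi>\<^sup>2 / n"
    "DS \<ge> 0" "Dc \<ge> 0" "pu < 1/2" "pu \<ge> 0" "pl \<le> 1"
    "Dc \<le> (5 - 2 * pl) / (1 - 2 * pu) * DS \<Longrightarrow> Q \<ge> n * \<phi>\<^sup>2 / s * DS\<^sup>2"
    "n > 0" "s \<ge> 1" "\<phi> > 0" "\<xi> > 0"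
  shows "DS + Dc \<le> FF \<phi> pl pu * s * \<xi> / n"
proof -
  define L where "L = (5 - 2 * pl) / (1 - 2 * pu)"
  have Lge: "L \<ge> 3 / (1 - 2 * pu)" unfolding L_def using assms by (intro divide_right_mono) auto
  have Lpos: "L > 0" unfolding L_def using assms by auto
  have main: "Q / 4 \<le> e + \<xi> * DS - \<xi> * (1 - pu) * Dc" using assms by linarith
  have Fge: "FF \<phi> pl pu \<ge> (1 + L) * (3 + 8 / \<phi>\<^sup>2)" "FF \<phi> pl pu \<ge> 4"
    unfolding FF_def L_def[symmetric] using Lpos by (auto intro!: mult_nonneg_nonneg add_nonneg_nonneg)
  have sxn: "s * \<xi> / n \<ge> \<xi> / n" using assms by (simp add: field_simps)
  show ?thesis
  proof (cases "Dc \<le> L * DS")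
    case True
    then have Qb: "Q \<ge> n * \<phi>\<^sup>2 / s * DS\<^sup>2" using assms L_def by auto
    have DSb: "DS \<le> (3 + 8 / \<phi>\<^sup>2) * (s * \<xi> / n)"
    proof (cases "DS \<le> s * \<xi> / n")
      case True
      moreover have "1 * (s * \<xi> / n) \<le> (3 + 8 / \<phi>\<^sup>2) * (s * \<xi> / n)"
        using assms by (intro mult_right_mono) auto
      ultimately show ?thesis by linarith
    next
      case False
      then have "\<xi> * DS \<ge> \<xi> * (s * \<xi> / n)" using assms by (intro mult_left_mono) auto
      moreover have "\<xi> * (s * \<xi> / n) \<ge> \<xi>\<^sup>2 / n" using assms sxn
        by (metis mult_left_mono less_imp_le power2_eq_square times_divide_eq_right)
      ultimately have "e \<le> \<xi> * DS" using assms by linarith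
      moreover have "\<xi> * (1 - pu) * Dc \<ge> 0" using assms by simp
      ultimately have "Q \<le> 8 * \<xi> * DS" using main by linarith
      then have "n * \<phi>\<^sup>2 / s * DS\<^sup>2 \<le> 8 * \<xi> * DS" using Qb by linarith
      moreover have "DS > 0" using False assms by (smt (verit) divide_nonneg_pos mult_nonneg_nonneg)
      moreover have "(n * \<phi>\<^sup>2 / s * DS) * DS = n * \<phi>\<^sup>2 / s * DS\<^sup>2" by (simp add: power2_eq_square mult.assoc)
      ultimately have "(n * \<phi>\<^sup>2 / s * DS) * DS \<le> (8 * \<xi>) * DS" by (metis mult.assoc)
      then have "n * \<phi>\<^sup>2 / s * DS \<le> 8 * \<xi>" using \<open>DS > 0\<close> mult_le_cancel_right_pos by blast
      then have "n * \<phi>\<^sup>2 * DS \<le> 8 * \<xi> * s" using assms by (simp add: field_simps)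
      then have "DS \<le> 8 / \<phi>\<^sup>2 * (s * \<xi> / n)" using assms by (simp add: field_simps)
      also have "\<dots> \<le> (3 + 8 / \<phi>\<^sup>2) * (s * \<xi> / n)" using assms
        by (intro mult_right_mono) (auto simp: field_simps)
      finally show ?thesis .
    qed
    have "DS + Dc \<le> (1 + L) * DS" using True by (simp add: algebra_simps)
    also have "\<dots> \<le> (1 + L) * ((3 + 8 / \<phi>\<^sup>2) * (s * \<xi> / n))" using DSb Lpos by (intro mult_left_mono) auto
    also have "\<dots> \<le> FF \<phi> pl pu * (s * \<xi> / n)" using Fge assms
      by (subst mult.assoc[symmetric], intro mult_right_mono) auto
    finally show ?thesis by simp
  next
    case False
    have "3/(1-2*pu)*DS \<le> L*DS" using Lge assms by (intro mult_right_mono) auto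
    then have "3/(1-2*pu)*DS \<le> Dc" using False by linarith
    then have h3: "3*DS \<le> Dc*(1-2*pu)" using assms by (simp add: field_simps)
    have q1: "3*(\<xi>*DS) \<le> \<xi>*Dc - 2*(\<xi>*Dc*pu)"
    proof -
      have "\<xi>*(3*DS) \<le> \<xi>*(Dc*(1-2*pu))" using h3 assms by (intro mult_left_mono) auto
      then show ?thesis by (simp add: algebra_simps)
    qed
    have q2: "\<xi>*(1-pu)*Dc = \<xi>*Dc - \<xi>*Dc*pu" by (simp add: algebra_simps)
    have q3: "\<xi>*Dc*pu \<ge> 0" "\<xi>*(Dc*(1-2*pu)) \<ge> 0" using assms by auto
    have q4: "\<xi>*Dc - 2*(\<xi>*Dc*pu) \<ge> 0" using q3(2) by (simp add: algebra_simps)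
    have "\<xi> * DS - \<xi> * (1 - pu) * Dc \<le> - \<xi> * Dc / 2" unfolding q2 using q1 q3 q4 by linarith
    then have "\<xi> * Dc / 2 \<le> e" using main assms by linarith
    then have "\<xi> * Dc \<le> 2 * (\<xi>\<^sup>2 / n)" using assms by linarith
    then have "Dc \<le> 2 * \<xi> / n" using assms by (simp add: power2_eq_square field_simps)
    moreover have "DS \<le> Dc"
    proof -
      have "Dc * pu \<ge> 0" using assms by simp
      moreover have "Dc * (1 - 2 * pu) = Dc - 2 * (Dc * pu)" by (simp add: algebra_simps)
      ultimately show ?thesis using h3 assms by linarith
    qed
    ultimately have "DS + Dc \<le> 4 * (\<xi> / n)" by simp
    also have "\<dots> \<le> FF \<phi> pl pu * (s * \<xi> / n)" using Fge sxn assms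
      by (intro mult_mono) (auto)
    finally show ?thesis by simp
  qed
qed



lemma coord_S:
  fixes Kii \<xi> s1 w a b B :: real
  assumes "Kii > 0" "\<xi> > 0" "s1 > 0" "\<xi> \<ge> B * Kii / s1\<^sup>2" "\<bar>a\<bar> \<le> B" "0 \<le> w" "w \<le> 1"
  shows "(\<xi> * (1 - w) * \<bar>Kii\<bar> * \<bar>a\<bar> + 1 / (2 * s1\<^sup>2) * w * Kii\<^sup>2 * a\<^sup>2)
       - (\<xi> * (1 - w) * \<bar>Kii\<bar> * \<bar>b\<bar> + 1 / (2 * s1\<^sup>2) * w * Kii\<^sup>2 * b\<^sup>2)
       \<le> Kii * (\<xi> * \<bar>b - a\<bar>)"
proof -
  have t1: "\<xi> * (1 - w) * \<bar>Kii\<bar> * \<bar>a\<bar> - \<xi> * (1 - w) * \<bar>Kii\<bar> * \<bar>b\<bar> \<le> Kii * ((1 - w) * \<xi> * \<bar>b - a\<bar>)"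
  proof -
    have "\<bar>a\<bar> - \<bar>b\<bar> \<le> \<bar>b - a\<bar>" by linarith
    then have "(\<xi> * (1 - w) * Kii) * (\<bar>a\<bar> - \<bar>b\<bar>) \<le> (\<xi> * (1 - w) * Kii) * \<bar>b - a\<bar>"
      using assms by (intro mult_left_mono) auto
    then show ?thesis using assms by (simp add: algebra_simps)
  qed
  have "a\<^sup>2 - b\<^sup>2 \<le> 2 * \<bar>a\<bar> * \<bar>b - a\<bar>"
  proof -
    have "a\<^sup>2 - b\<^sup>2 = - (2 * a * (b - a)) - (b - a)\<^sup>2" by (simp add: power2_eq_square algebra_simps)
    also have "\<dots> \<le> - (2 * a * (b - a))" by simp
    also have "\<dots> \<le> 2 * \<bar>a\<bar> * \<bar>b - a\<bar>" by (simp add: abs_mult[symmetric])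
    finally show ?thesis .
  qed
  also have "\<dots> \<le> 2 * B * \<bar>b - a\<bar>" using assms by (intro mult_right_mono) auto
  finally have h: "a\<^sup>2 - b\<^sup>2 \<le> 2 * B * \<bar>b - a\<bar>" .
  have "1 / (2 * s1\<^sup>2) * w * Kii\<^sup>2 * a\<^sup>2 - 1 / (2 * s1\<^sup>2) * w * Kii\<^sup>2 * b\<^sup>2
      = (w * Kii\<^sup>2 / (2 * s1\<^sup>2)) * (a\<^sup>2 - b\<^sup>2)" using assms by (simp add: field_simps)
  also have "\<dots> \<le> (w * Kii\<^sup>2 / (2 * s1\<^sup>2)) * (2 * B * \<bar>b - a\<bar>)" using h assms by (intro mult_left_mono) auto
  also have "\<dots> = (w * Kii * \<bar>b - a\<bar>) * (B * Kii / s1\<^sup>2)" using assms by (simp add: power2_eq_square field_simps)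
  also have "\<dots> \<le> (w * Kii * \<bar>b - a\<bar>) * \<xi>" using assms by (intro mult_left_mono) auto
  finally have t2: "1 / (2 * s1\<^sup>2) * w * Kii\<^sup>2 * a\<^sup>2 - 1 / (2 * s1\<^sup>2) * w * Kii\<^sup>2 * b\<^sup>2 \<le> (w * Kii * \<bar>b - a\<bar>) * \<xi>" .
  have "Kii * ((1 - w) * \<xi> * \<bar>b - a\<bar>) + (w * Kii * \<bar>b - a\<bar>) * \<xi> = Kii * (\<xi> * \<bar>b - a\<bar>)"
    by (simp add: algebra_simps)
  then show ?thesis using t1 t2 by linarith
qed

lemma coord_Sc:
  fixes Kii \<xi> s1 w b pu :: real
  assumes "Kii > 0" "\<xi> > 0" "0 \<le> w" "w \<le> pu"
  shows "(\<xi> * (1 - w) * \<bar>Kii\<bar> * \<bar>0\<bar> + 1 / (2 * s1\<^sup>2) * w * Kii\<^sup>2 * 0\<^sup>2)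
       - (\<xi> * (1 - w) * \<bar>Kii\<bar> * \<bar>b\<bar> + 1 / (2 * s1\<^sup>2) * w * Kii\<^sup>2 * b\<^sup>2)
       \<le> Kii * (- \<xi> * (1 - pu) * \<bar>b - 0\<bar>)"
proof -
  have r: "0 \<le> 1 / (2 * s1\<^sup>2) * w * Kii\<^sup>2 * b\<^sup>2" using assms by simp
  have m: "(\<xi> * Kii * \<bar>b\<bar>) * (1 - pu) \<le> (\<xi> * Kii * \<bar>b\<bar>) * (1 - w)"
    using assms by (intro mult_left_mono) auto
  have e1: "\<xi> * (1 - w) * \<bar>Kii\<bar> * \<bar>b\<bar> = (\<xi> * Kii * \<bar>b\<bar>) * (1 - w)" using assms by simp
  have e2: "Kii * (- \<xi> * (1 - pu) * \<bar>b - 0\<bar>) = - ((\<xi> * Kii * \<bar>b\<bar>) * (1 - pu))" by simp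
  show ?thesis unfolding e2 e1 using r m by simp
qed

lemma basic_ineq:
  fixes x :: "nat \<Rightarrow> nat \<Rightarrow> real" and bh bs pw :: "nat \<Rightarrow> real"
  assumes opt: "enet_obj n p i Kii \<xi> s1 pw x bh \<le> enet_obj n p i Kii \<xi> s1 pw x bs"
    and pos: "Kii > 0" "\<xi> > 0" "s1 > 0" "\<xi> \<ge> B * Kii / s1\<^sup>2"
    and bnd: "\<forall>j\<in>supp_set p i bs. \<bar>bs j\<bar> \<le> B"
    and pw01: "\<forall>j\<in>other_idx p i. 0 \<le> pw j \<and> pw j \<le> 1"
    and pwu: "\<forall>j\<in>other_idx p i - supp_set p i bs. pw j \<le> pu"
  shows "(\<Sum>r<n. (\<Sum>j\<in>other_idx p i. x r j * (bh j - bs j))\<^sup>2) / 2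
     \<le> (\<Sum>r<n. (x r i - (\<Sum>j\<in>other_idx p i. x r j * bs j)) * (\<Sum>j\<in>other_idx p i. x r j * (bh j - bs j)))
        + \<xi> * (\<Sum>j\<in>supp_set p i bs. \<bar>bh j - bs j\<bar>)
        - \<xi> * (1 - pu) * (\<Sum>j\<in>other_idx p i - supp_set p i bs. \<bar>bh j - bs j\<bar>)"
proof -
  define J where "J = other_idx p i"
  define S where "S = supp_set p i bs"
  define z where "z r = (\<Sum>j\<in>J. x r j * (bh j - bs j))" for r
  define e where "e r = x r i - (\<Sum>j\<in>J. x r j * bs j)" for r
  define pen where "pen \<beta> = (\<Sum>j\<in>J. \<xi> * (1 - pw j) * \<bar>Kii\<bar> * \<bar>\<beta> j\<bar>)
     + (\<Sum>j\<in>J. (1 / (2 * s1\<^sup>2)) * pw j * Kii\<^sup>2 * (\<beta> j)\<^sup>2)" for \<beta> :: "nat \<Rightarrow> real"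
  have finJ: "finite J" unfolding J_def other_idx_def by auto
  have SJ: "S \<subseteq> J" unfolding S_def J_def supp_set_def by auto
  have res: "x r i - (\<Sum>j\<in>J. x r j * bh j) = e r - z r" for r
    unfolding e_def z_def by (simp add: sum_subtractf algebra_simps)
  have objh: "enet_obj n p i Kii \<xi> s1 pw x bh = Kii / 2 * (\<Sum>r<n. (e r - z r)\<^sup>2) + pen bh"
    unfolding enet_obj_def pen_def J_def[symmetric] res by simp
  have objs: "enet_obj n p i Kii \<xi> s1 pw x bs = Kii / 2 * (\<Sum>r<n. (e r)\<^sup>2) + pen bs"
    unfolding enet_obj_def pen_def J_def[symmetric] e_def by simp
  have sq: "(\<Sum>r<n. (e r - z r)\<^sup>2) = (\<Sum>r<n. (e r)\<^sup>2) - 2 * (\<Sum>r<n. e r * z r) + (\<Sum>r<n. (z r)\<^sup>2)"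
    by (simp add: power2_diff sum.distrib sum_subtractf sum_distrib_left algebra_simps)
  have coord: "(\<xi> * (1 - pw j) * \<bar>Kii\<bar> * \<bar>bs j\<bar> + 1 / (2 * s1\<^sup>2) * pw j * Kii\<^sup>2 * (bs j)\<^sup>2)
       - (\<xi> * (1 - pw j) * \<bar>Kii\<bar> * \<bar>bh j\<bar> + 1 / (2 * s1\<^sup>2) * pw j * Kii\<^sup>2 * (bh j)\<^sup>2)
       \<le> Kii * (if j \<in> S then \<xi> * \<bar>bh j - bs j\<bar> else - \<xi> * (1 - pu) * \<bar>bh j - bs j\<bar>)"
    if "j \<in> J" for j
  proof (cases "j \<in> S")
    case True
    then show ?thesis using coord_S[OF pos, of "bs j" "pw j" "bh j"] bnd pw01 that
      unfolding S_def J_def by auto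
  next
    case False
    then have "bs j = 0" using that unfolding S_def J_def supp_set_def by auto
    then show ?thesis using coord_Sc[OF pos(1,2), of "pw j" pu s1 "bh j"] False pw01 pwu that
      unfolding S_def J_def by auto
  qed
  have "pen bs - pen bh = (\<Sum>j\<in>J. (\<xi> * (1 - pw j) * \<bar>Kii\<bar> * \<bar>bs j\<bar> + 1 / (2 * s1\<^sup>2) * pw j * Kii\<^sup>2 * (bs j)\<^sup>2)
       - (\<xi> * (1 - pw j) * \<bar>Kii\<bar> * \<bar>bh j\<bar> + 1 / (2 * s1\<^sup>2) * pw j * Kii\<^sup>2 * (bh j)\<^sup>2))"
    unfolding pen_def by (simp add: sum.distrib sum_subtractf)
  also have "\<dots> \<le> (\<Sum>j\<in>J. Kii * (if j \<in> S then \<xi> * \<bar>bh j - bs j\<bar> else - \<xi> * (1 - pu) * \<bar>bh j - bs j\<bar>))"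
    by (intro sum_mono coord)
  also have "\<dots> = Kii * ((\<Sum>j\<in>S. \<xi> * \<bar>bh j - bs j\<bar>) + (\<Sum>j\<in>J - S. - \<xi> * (1 - pu) * \<bar>bh j - bs j\<bar>))"
  proof -
    have "(\<Sum>j\<in>J. (if j \<in> S then \<xi> * \<bar>bh j - bs j\<bar> else - \<xi> * (1 - pu) * \<bar>bh j - bs j\<bar>))
       = (\<Sum>j\<in>S. \<xi> * \<bar>bh j - bs j\<bar>) + (\<Sum>j\<in>J - S. - \<xi> * (1 - pu) * \<bar>bh j - bs j\<bar>)"
      (is "sum ?f J = _")
    proof -
      have "sum ?f J = sum ?f S + sum ?f (J - S)"
        using sum.subset_diff[OF SJ finJ, of ?f] by simp
      also have "sum ?f S = (\<Sum>j\<in>S. \<xi> * \<bar>bh j - bs j\<bar>)" by (rule sum.cong) auto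
      also have "sum ?f (J - S) = (\<Sum>j\<in>J - S. - \<xi> * (1 - pu) * \<bar>bh j - bs j\<bar>)" by (rule sum.cong) auto
      finally show ?thesis .
    qed
    then show ?thesis by (simp add: sum_distrib_left[symmetric])
  qed
  also have "\<dots> = Kii * (\<xi> * (\<Sum>j\<in>S. \<bar>bh j - bs j\<bar>) - \<xi> * (1 - pu) * (\<Sum>j\<in>J - S. \<bar>bh j - bs j\<bar>))"
    by (simp add: sum_distrib_left sum_negf)
  finally have penb: "pen bs - pen bh \<le> Kii * (\<xi> * (\<Sum>j\<in>S. \<bar>bh j - bs j\<bar>) - \<xi> * (1 - pu) * (\<Sum>j\<in>J - S. \<bar>bh j - bs j\<bar>))" .
  from opt have "Kii / 2 * (\<Sum>r<n. (e r - z r)\<^sup>2) + pen bh \<le> Kii / 2 * (\<Sum>r<n. (e r)\<^sup>2) + pen bs"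
    unfolding objh objs .
  then have "Kii / 2 * (\<Sum>r<n. (z r)\<^sup>2) \<le> Kii * (\<Sum>r<n. e r * z r) + (pen bs - pen bh)"
    unfolding sq by (simp add: algebra_simps)
  also have "\<dots> \<le> Kii * ((\<Sum>r<n. e r * z r) + \<xi> * (\<Sum>j\<in>S. \<bar>bh j - bs j\<bar>) - \<xi> * (1 - pu) * (\<Sum>j\<in>J - S. \<bar>bh j - bs j\<bar>))"
    using penb by (simp add: algebra_simps)
  finally have "Kii * ((\<Sum>r<n. (z r)\<^sup>2) / 2) \<le> Kii * ((\<Sum>r<n. e r * z r) + \<xi> * (\<Sum>j\<in>S. \<bar>bh j - bs j\<bar>) - \<xi> * (1 - pu) * (\<Sum>j\<in>J - S. \<bar>bh j - bs j\<bar>))"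
    by simp
  then have "(\<Sum>r<n. (z r)\<^sup>2) / 2 \<le> (\<Sum>r<n. e r * z r) + \<xi> * (\<Sum>j\<in>S. \<bar>bh j - bs j\<bar>) - \<xi> * (1 - pu) * (\<Sum>j\<in>J - S. \<bar>bh j - bs j\<bar>)"
    using pos by simp
  then show ?thesis unfolding z_def e_def J_def S_def .
qed



lemma nn_integral_normal_density: "s > 0 \<Longrightarrow> (\<integral>\<^sup>+x. ennreal (normal_density m s x) \<partial>lborel) = 1"
  by (subst nn_integral_eq_integral) (auto intro: integrable_normal_density simp: integral_normal_density)

lemma inv_sqrt_le_exp:
  fixes q :: real assumes "0 \<le> q" "q \<le> 1/2"
  shows "1 / sqrt (1 - q) \<le> exp q"
proof -
  have "1 \<le> (1 + q)\<^sup>2 * (1 - q)"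
  proof -
    have "(1 + q)\<^sup>2 * (1 - q) = 1 + q * (1 - q - q\<^sup>2)" by (simp add: power2_eq_square algebra_simps)
    moreover have "1 - q - q\<^sup>2 \<ge> 0"
    proof -
      have "q * q \<le> q * (1/2)" using assms by (intro mult_left_mono) auto
      then have "q\<^sup>2 \<le> q * (1/2)" by (simp add: power2_eq_square)
      then show ?thesis using assms by linarith
    qed
    ultimately show ?thesis using assms by simp
  qed
  then have "1 \<le> sqrt ((1 + q)\<^sup>2 * (1 - q))" by simp
  then have "1 \<le> (1 + q) * sqrt (1 - q)" using assms by (simp add: real_sqrt_mult)
  then have "1 / sqrt (1 - q) \<le> 1 + q" using assms by (simp add: field_simps)
  also have "\<dots> \<le> exp q" by (rule exp_ge_add_one_self)
  finally show ?thesis .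
qed

lemma normal_sq_mgf:
  fixes \<sigma> \<mu> :: real
  assumes "\<sigma> > 0" "0 \<le> \<mu>" "2 * \<mu> * \<sigma>\<^sup>2 \<le> 1/2"
  shows "(\<integral>\<^sup>+x. ennreal (normal_density 0 \<sigma> x) * ennreal (exp (\<mu> * x\<^sup>2)) \<partial>lborel) \<le> ennreal (exp (2 * \<mu> * \<sigma>\<^sup>2))"
proof -
  define q where "q = 2 * \<mu> * \<sigma>\<^sup>2"
  have q: "0 \<le> q" "q \<le> 1/2" using assms unfolding q_def by auto
  define \<sigma>' where "\<sigma>' = \<sigma> / sqrt (1 - q)"
  have sq: "sqrt (1 - q) > 0" using q by simp
  have \<sigma>'2: "\<sigma>'\<^sup>2 = \<sigma>\<^sup>2 / (1 - q)" unfolding \<sigma>'_def using q by (simp add: power_divide)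
  have pt: "normal_density 0 \<sigma> x * exp (\<mu> * x\<^sup>2) = (1 / sqrt (1 - q)) * normal_density 0 \<sigma>' x" for x
  proof -
    have e: "- (x - 0)\<^sup>2 / (2 * \<sigma>\<^sup>2) + \<mu> * x\<^sup>2 = - (x - 0)\<^sup>2 / (2 * \<sigma>'\<^sup>2)"
      unfolding \<sigma>'2 q_def using assms q by (simp add: field_simps q_def)
    have s: "1 / sqrt (2 * pi * \<sigma>'\<^sup>2) = sqrt (1 - q) / sqrt (2 * pi * \<sigma>\<^sup>2)"
      unfolding \<sigma>'2 using q assms by (simp add: real_sqrt_divide real_sqrt_mult field_simps)
    show ?thesis unfolding normal_density_def s
      using e[symmetric] sq by (simp add: exp_add[symmetric] field_simps)
  qed
  have "(\<integral>\<^sup>+x. ennreal (normal_density 0 \<sigma> x) * ennreal (exp (\<mu> * x\<^sup>2)) \<partial>lborel)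
      = (\<integral>\<^sup>+x. ennreal (1 / sqrt (1 - q)) * ennreal (normal_density 0 \<sigma>' x) \<partial>lborel)"
  proof (intro nn_integral_cong)
    fix x
    have "ennreal (normal_density 0 \<sigma> x) * ennreal (exp (\<mu> * x\<^sup>2)) = ennreal (normal_density 0 \<sigma> x * exp (\<mu> * x\<^sup>2))"
      by (simp add: ennreal_mult)
    also have "\<dots> = ennreal ((1 / sqrt (1 - q)) * normal_density 0 \<sigma>' x)" by (simp only: pt)
    also have "\<dots> = ennreal (1 / sqrt (1 - q)) * ennreal (normal_density 0 \<sigma>' x)"
      using sq by (intro ennreal_mult) auto
    finally show "ennreal (normal_density 0 \<sigma> x) * ennreal (exp (\<mu> * x\<^sup>2)) = ennreal (1 / sqrt (1 - q)) * ennreal (normal_density 0 \<sigma>' x)" .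
  qed
  also have "\<dots> = ennreal (1 / sqrt (1 - q))"
    using assms sq by (simp add: nn_integral_cmult nn_integral_normal_density \<sigma>'_def)
  also have "\<dots> \<le> ennreal (exp q)" using inv_sqrt_le_exp[OF q] by simp
  finally show ?thesis unfolding q_def .
qed

lemma (in prob_space) chi_mgf:
  fixes eps :: "nat \<Rightarrow> 'a \<Rightarrow> real"
  assumes dist: "\<forall>r<n. distributed M lborel (eps r) (\<lambda>x. ennreal (normal_density 0 \<sigma> x))" and sp: "\<sigma> > 0"
    and ind: "indep_vars (\<lambda>_. borel) eps {..<n}"
    and mu: "0 \<le> \<mu>" "2 * \<mu> * \<sigma>\<^sup>2 \<le> 1/2"
  shows "(\<integral>\<^sup>+\<omega>. ennreal (exp (\<mu> * (\<Sum>r<n. (eps r \<omega>)\<^sup>2))) \<partial>M) \<le> ennreal (exp (real n * (2 * \<mu> * \<sigma>\<^sup>2)))"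
proof -
  have "(\<integral>\<^sup>+\<omega>. ennreal (exp (\<mu> * (\<Sum>r<n. (eps r \<omega>)\<^sup>2))) \<partial>M)
      = (\<integral>\<^sup>+\<omega>. (\<Prod>r<n. ennreal (exp (\<mu> * (eps r \<omega>)\<^sup>2))) \<partial>M)"
    by (intro nn_integral_cong) (simp add: sum_distrib_left exp_sum prod_ennreal)
  also have "\<dots> = (\<Prod>r<n. \<integral>\<^sup>+\<omega>. ennreal (exp (\<mu> * (eps r \<omega>)\<^sup>2)) \<partial>M)"
  proof (rule indep_vars_nn_integral)
    show "indep_vars (\<lambda>_. borel) (\<lambda>r \<omega>. ennreal (exp (\<mu> * (eps r \<omega>)\<^sup>2))) {..<n}"
      using indep_vars_compose2[OF ind, of "\<lambda>r x. ennreal (exp (\<mu> * x\<^sup>2))" "\<lambda>_. borel"] by simp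
  qed auto
  also have "\<dots> \<le> (\<Prod>r<n. ennreal (exp (2 * \<mu> * \<sigma>\<^sup>2)))"
  proof (rule prod_mono_ennreal)
    fix r assume r: "r \<in> {..<n}"
    have "(\<integral>\<^sup>+\<omega>. ennreal (exp (\<mu> * (eps r \<omega>)\<^sup>2)) \<partial>M)
        = (\<integral>\<^sup>+x. ennreal (normal_density 0 \<sigma> x) * ennreal (exp (\<mu> * x\<^sup>2)) \<partial>lborel)"
      using distributed_nn_integral[OF dist[rule_format, of r], of "\<lambda>x. ennreal (exp (\<mu> * x\<^sup>2))"] r by simp
    also have "\<dots> \<le> ennreal (exp (2 * \<mu> * \<sigma>\<^sup>2))" by (rule normal_sq_mgf[OF sp mu])
    finally show "(\<integral>\<^sup>+\<omega>. ennreal (exp (\<mu> * (eps r \<omega>)\<^sup>2)) \<partial>M) \<le> ennreal (exp (2 * \<mu> * \<sigma>\<^sup>2))" .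
  qed
  also have "\<dots> = ennreal (exp (real n * (2 * \<mu> * \<sigma>\<^sup>2)))"
    by (simp add: exp_of_nat_mult ennreal_power)
  finally show ?thesis .
qed



lemma meas_test2: "j \<in> J \<Longrightarrow> (\<lambda>z. ennreal (exp (t * (\<Sum>r<n. snd z r j * fst z r)))) \<in> borel_measurable (PiM {..<n} (\<lambda>_. borel :: real measure) \<Otimes>\<^sub>M PiM {..<n} (\<lambda>_. PiM J (\<lambda>_. borel :: real measure)))"
  apply measurable
  subgoal for r
    apply (rule measurable_compose[OF measurable_snd, where g="\<lambda>y. y r j"])
    apply (rule measurable_compose[where f="\<lambda>y. y r" and g="\<lambda>y. y j"])
    apply (rule measurable_component_singleton, simp)
    apply (rule measurable_component_singleton, simp)
    done
  subgoal for r
    apply (rule measurable_compose[OF measurable_fst, where g="\<lambda>y. y r"])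
    apply (rule measurable_component_singleton)
    by auto
  done

lemma meas_row_fun: "j \<in> J \<Longrightarrow> (\<lambda>x. ennreal (exp (c * x j))) \<in> borel_measurable (PiM J (\<lambda>_. borel :: real measure))"
  by measurable

lemma meas_G2: "j \<in> J \<Longrightarrow> (\<lambda>x. ennreal (exp (t * (\<Sum>r<n. x r j * e r)))) \<in> borel_measurable (PiM {..<n} (\<lambda>_. PiM J (\<lambda>_. borel :: real measure)))"
  apply measurable
  subgoal for r
    apply (rule measurable_compose[where f="\<lambda>y. y r" and g="\<lambda>y. y j"])
    apply (rule measurable_component_singleton, simp)
    apply (rule measurable_component_singleton, simp)
    done
  by simp

lemma (in prob_space) cross_mgf:
  fixes X :: "'a \<Rightarrow> nat \<Rightarrow> nat \<Rightarrow> real" and eps :: "nat \<Rightarrow> 'a \<Rightarrow> real"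
  assumes meas: "\<forall>r j. (\<lambda>\<omega>. X \<omega> r j) \<in> borel_measurable M"
    and dist: "\<forall>r<n. distributed M lborel (eps r) (\<lambda>x. ennreal (normal_density 0 \<sigma> x))" and sp: "\<sigma> > 0"
    and ind: "indep_vars (\<lambda>_. borel) eps {..<n}"
    and prodeq: "distr M (PiM {..<n} (\<lambda>_. borel)) (\<lambda>\<omega>. \<lambda>r\<in>{..<n}. eps r \<omega>)
           \<Otimes>\<^sub>M distr M (PiM {..<n} (\<lambda>_. PiM J (\<lambda>_. borel))) (\<lambda>\<omega>. \<lambda>r\<in>{..<n}. \<lambda>j\<in>J. X \<omega> r j)
         = distr M (PiM {..<n} (\<lambda>_. borel) \<Otimes>\<^sub>M PiM {..<n} (\<lambda>_. PiM J (\<lambda>_. borel)))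
             (\<lambda>\<omega>. (\<lambda>r\<in>{..<n}. eps r \<omega>, \<lambda>r\<in>{..<n}. \<lambda>j\<in>J. X \<omega> r j))"
    and rind: "indep_vars (\<lambda>_. PiM J (\<lambda>_. borel)) (\<lambda>r \<omega>. \<lambda>j\<in>J. X \<omega> r j) {..<n}"
    and jJ: "j \<in> J"
    and subg: "\<forall>r<n. \<forall>\<tau>. (\<integral>\<^sup>+\<omega>. ennreal (exp (\<tau> * X \<omega> r j)) \<partial>M) \<le> ennreal (exp (\<tau>\<^sup>2 * sX\<^sup>2 / 2))"
    and tb: "2 * (t\<^sup>2 * sX\<^sup>2 / 2) * \<sigma>\<^sup>2 \<le> 1/2"
  shows "(\<integral>\<^sup>+\<omega>. ennreal (exp (t * (\<Sum>r<n. X \<omega> r j * eps r \<omega>))) \<partial>M)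
     \<le> ennreal (exp (real n * (2 * (t\<^sup>2 * sX\<^sup>2 / 2) * \<sigma>\<^sup>2)))"
proof -
  define \<mu> where "\<mu> = t\<^sup>2 * sX\<^sup>2 / 2"
  have mu0: "0 \<le> \<mu>" unfolding \<mu>_def by simp
  define PE where "PE = PiM {..<n} (\<lambda>_. borel :: real measure)"
  define PR where "PR = PiM {..<n} (\<lambda>_. PiM J (\<lambda>_. borel :: real measure))"
  define Ev where "Ev = (\<lambda>\<omega>. \<lambda>r\<in>{..<n}. eps r \<omega>)"
  define Rv where "Rv = (\<lambda>\<omega>. \<lambda>r\<in>{..<n}. \<lambda>j\<in>J. X \<omega> r j)"
  define G where "G = (\<lambda>z. ennreal (exp (t * (\<Sum>r<n. snd z r j * fst z r))))"
  have eps_meas: "eps r \<in> borel_measurable M" if "r < n" for r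
    using distributed_measurable[OF dist[rule_format, OF that]] by simp
  have Ev_meas: "Ev \<in> measurable M PE"
    unfolding Ev_def PE_def by (rule measurable_restrict) (use eps_meas in auto)
  have Rv_meas: "Rv \<in> measurable M PR"
    unfolding Rv_def PR_def
    by (intro measurable_restrict) (use meas in auto)
  have G_meas: "G \<in> borel_measurable (PE \<Otimes>\<^sub>M PR)"
    unfolding G_def PE_def PR_def using meas_test2[OF jJ] .
  interpret DR: prob_space "distr M PR Rv" by (rule prob_space_distr[OF Rv_meas])
  have "(\<integral>\<^sup>+\<omega>. ennreal (exp (t * (\<Sum>r<n. X \<omega> r j * eps r \<omega>))) \<partial>M) = (\<integral>\<^sup>+\<omega>. G (Ev \<omega>, Rv \<omega>) \<partial>M)"
    unfolding G_def Ev_def Rv_def using jJ by (intro nn_integral_cong) simp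
  also have "\<dots> = (\<integral>\<^sup>+z. G z \<partial>distr M (PE \<Otimes>\<^sub>M PR) (\<lambda>\<omega>. (Ev \<omega>, Rv \<omega>)))"
    by (rule nn_integral_distr[symmetric]) (use Ev_meas Rv_meas G_meas in auto)
  also have "distr M (PE \<Otimes>\<^sub>M PR) (\<lambda>\<omega>. (Ev \<omega>, Rv \<omega>)) = distr M PE Ev \<Otimes>\<^sub>M distr M PR Rv"
    unfolding PE_def PR_def Ev_def Rv_def using prodeq by simp
  also have "(\<integral>\<^sup>+z. G z \<partial>(distr M PE Ev \<Otimes>\<^sub>M distr M PR Rv)) = (\<integral>\<^sup>+e. \<integral>\<^sup>+x. G (e, x) \<partial>distr M PR Rv \<partial>distr M PE Ev)"
  proof (rule DR.nn_integral_fst[symmetric])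
    show "G \<in> borel_measurable (distr M PE Ev \<Otimes>\<^sub>M distr M PR Rv)"
      using G_meas by (simp add: measurable_cong_sets[OF sets_pair_measure_cong[OF sets_distr sets_distr] refl])
  qed
  also have "\<dots> \<le> (\<integral>\<^sup>+e. ennreal (exp (\<mu> * (\<Sum>r<n. (e r)\<^sup>2))) \<partial>distr M PE Ev)"
  proof (rule nn_integral_mono)
    fix e :: "nat \<Rightarrow> real"
    have "(\<integral>\<^sup>+x. G (e, x) \<partial>distr M PR Rv) = (\<integral>\<^sup>+\<omega>. G (e, Rv \<omega>) \<partial>M)"
    proof (rule nn_integral_distr[OF Rv_meas])
      show "(\<lambda>x. G (e, x)) \<in> borel_measurable (distr M PR Rv)"
        unfolding G_def PR_def by (simp add: meas_G2[OF jJ])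
    qed
    also have "\<dots> = (\<integral>\<^sup>+\<omega>. (\<Prod>r<n. ennreal (exp ((t * e r) * X \<omega> r j))) \<partial>M)"
      unfolding G_def Rv_def using jJ
      by (intro nn_integral_cong) (simp add: sum_distrib_left exp_sum prod_ennreal mult.assoc mult.commute mult.left_commute)
    also have "\<dots> = (\<Prod>r<n. \<integral>\<^sup>+\<omega>. ennreal (exp ((t * e r) * X \<omega> r j)) \<partial>M)"
    proof (rule indep_vars_nn_integral)
      show "indep_vars (\<lambda>_. borel) (\<lambda>r \<omega>. ennreal (exp ((t * e r) * X \<omega> r j))) {..<n}"
        using indep_vars_compose2[OF rind, of "\<lambda>r x. ennreal (exp ((t * e r) * x j))" "\<lambda>_. borel"] jJ
        by (simp add: meas_row_fun)
    qed auto
    also have "\<dots> \<le> (\<Prod>r<n. ennreal (exp ((t * e r)\<^sup>2 * sX\<^sup>2 / 2)))"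
      using subg by (intro prod_mono_ennreal) auto
    also have "\<dots> = ennreal (exp (\<mu> * (\<Sum>r<n. (e r)\<^sup>2)))"
      unfolding \<mu>_def by (simp add: prod_ennreal exp_sum[symmetric] sum_distrib_left power_mult_distrib algebra_simps)
    finally show "(\<integral>\<^sup>+x. G (e, x) \<partial>distr M PR Rv) \<le> ennreal (exp (\<mu> * (\<Sum>r<n. (e r)\<^sup>2)))" .
  qed
  also have "\<dots> = (\<integral>\<^sup>+\<omega>. ennreal (exp (\<mu> * (\<Sum>r<n. (Ev \<omega> r)\<^sup>2))) \<partial>M)"
    by (rule nn_integral_distr[OF Ev_meas]) (simp add: PE_def)
  also have "\<dots> = (\<integral>\<^sup>+\<omega>. ennreal (exp (\<mu> * (\<Sum>r<n. (eps r \<omega>)\<^sup>2))) \<partial>M)"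
    unfolding Ev_def by (intro nn_integral_cong) simp
  also have "\<dots> \<le> ennreal (exp (real n * (2 * \<mu> * \<sigma>\<^sup>2)))"
    by (rule chi_mgf[OF dist sp ind mu0]) (use tb in \<open>simp add: \<mu>_def\<close>)
  finally show ?thesis unfolding \<mu>_def .
qed



lemma (in prob_space) chernoff:
  fixes Y :: "'a \<Rightarrow> real"
  assumes Ym: "Y \<in> borel_measurable M" and t: "0 \<le> t"
    and mgf: "(\<integral>\<^sup>+\<omega>. ennreal (exp (t * Y \<omega>)) \<partial>M) \<le> ennreal K"
  shows "prob {\<omega>\<in>space M. Y \<omega> \<ge> a} \<le> exp (- t * a) * K"
proof -
  have K0: "K \<ge> 0"
  proof (rule ccontr)
    assume "\<not> K \<ge> 0"
    then have "ennreal K = 0" by (simp add: ennreal_eq_0_iff)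
    then have "(\<integral>\<^sup>+\<omega>. ennreal (exp (t * Y \<omega>)) \<partial>M) = 0" using mgf by simp
    moreover have "(\<integral>\<^sup>+\<omega>. ennreal (exp (t * Y \<omega>)) \<partial>M) > 0"
    proof -
      have "(\<integral>\<^sup>+\<omega>. ennreal (exp (t * Y \<omega>)) \<partial>M) \<noteq> 0"
      proof -
        have m1: "(\<lambda>\<omega>. ennreal (exp (t * Y \<omega>))) \<in> borel_measurable M" using Ym by measurable
        have m2: "(\<lambda>\<omega>. exp (t * Y \<omega>)) \<in> borel_measurable M" using Ym by measurable
        show ?thesis using m1 m2 by (subst nn_integral_0_iff_AE) (auto simp: AE_False)
      qed
      then show ?thesis by (simp add: zero_less_iff_neq_zero)
    qed
    ultimately show False by simp
  qed
  have "emeasure M {\<omega>\<in>space M. Y \<omega> \<ge> a} = (\<integral>\<^sup>+\<omega>. indicator {\<omega>\<in>space M. Y \<omega> \<ge> a} \<omega> \<partial>M)"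
    using Ym by (intro nn_integral_indicator[symmetric]) measurable
  also have "\<dots> \<le> (\<integral>\<^sup>+\<omega>. ennreal (exp (- t * a)) * ennreal (exp (t * Y \<omega>)) \<partial>M)"
  proof (rule nn_integral_mono)
    fix \<omega> assume "\<omega> \<in> space M"
    show "indicator {\<omega>\<in>space M. Y \<omega> \<ge> a} \<omega> \<le> ennreal (exp (- t * a)) * ennreal (exp (t * Y \<omega>))"
    proof (cases "Y \<omega> \<ge> a")
      case True
      then have "t * a \<le> t * Y \<omega>" using t by (intro mult_left_mono) auto
      then have "- t * a + t * Y \<omega> \<ge> 0" by simp
      then have "1 \<le> exp (- t * a + t * Y \<omega>)" by simp
      then have "1 \<le> ennreal (exp (- t * a) * exp (t * Y \<omega>))" by (simp add: exp_add[symmetric])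
      then show ?thesis using True \<open>\<omega> \<in> space M\<close> by (simp add: ennreal_mult)
    qed simp
  qed
  also have "\<dots> = ennreal (exp (- t * a)) * (\<integral>\<^sup>+\<omega>. ennreal (exp (t * Y \<omega>)) \<partial>M)"
    by (rule nn_integral_cmult) (use Ym in measurable)
  also have "\<dots> \<le> ennreal (exp (- t * a)) * ennreal K" using mgf by (rule mult_left_mono) simp
  also have "\<dots> = ennreal (exp (- t * a) * K)" using K0 by (simp add: ennreal_mult)
  finally have "ennreal (prob {\<omega>\<in>space M. Y \<omega> \<ge> a}) \<le> ennreal (exp (- t * a) * K)"
    by (simp add: emeasure_eq_measure)
  then show ?thesis using K0 by (simp add: ennreal_le_iff)
qed

lemma choose_tau:
  fixes a n b L :: real
  assumes "a > 0" "n > 0" "b > 0" "L \<ge> 0" "a\<^sup>2 \<ge> 8 * b * n * L" "n \<ge> 4 * L"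
  shows "\<exists>\<tau>\<ge>0. \<tau>\<^sup>2 * b \<le> 1/2 \<and> - \<tau> * a + n * (\<tau>\<^sup>2 * b) \<le> - 2 * L"
proof (cases "a\<^sup>2 \<le> 2 * n\<^sup>2 * b")
  case True
  define \<tau> where "\<tau> = a / (2 * n * b)"
  have "\<tau>\<^sup>2 * b = a\<^sup>2 / (4 * n\<^sup>2 * b)" unfolding \<tau>_def using assms by (simp add: power2_eq_square field_simps)
  also have "\<dots> \<le> 1/2" using True assms by (simp add: field_simps)
  finally have c1: "\<tau>\<^sup>2 * b \<le> 1/2" .
  have "- \<tau> * a + n * (\<tau>\<^sup>2 * b) = - a\<^sup>2 / (4 * n * b)"
    unfolding \<tau>_def using assms by (simp add: power2_eq_square field_simps)
  also have "\<dots> \<le> - 2 * L"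
  proof -
    have "8 * b * n * L \<le> a\<^sup>2" by fact
    then have "2 * L \<le> a\<^sup>2 / (4 * n * b)" using assms by (simp add: field_simps)
    then show ?thesis by simp
  qed
  finally show ?thesis using c1 assms unfolding \<tau>_def by (intro exI[of _ "a / (2 * n * b)"]) auto
next
  case False
  define \<tau> where "\<tau> = 1 / sqrt (2 * b)"
  have sb: "sqrt (2 * b) > 0" using assms by simp
  have c1: "\<tau>\<^sup>2 * b = 1/2" unfolding \<tau>_def using assms by (simp add: power_divide)
  have "(n * sqrt (2 * b))\<^sup>2 < a\<^sup>2" using False assms by (simp add: power_mult_distrib)
  then have "n * sqrt (2 * b) < a" using assms sb by (smt (verit) power_mono)
  then have "n < \<tau> * a" unfolding \<tau>_def using sb by (simp add: field_simps)
  then have X0: "n / 2 - \<tau> * a \<le> - 2 * L" using assms by linarith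
  have nn: "n * (\<tau>\<^sup>2 * b) = n / 2" using c1 by simp
  have X: "- \<tau> * a + n * (\<tau>\<^sup>2 * b) \<le> - 2 * L" using X0 nn by linarith
  have t0: "\<tau> \<ge> 0" unfolding \<tau>_def using assms by simp
  have c1': "\<tau>\<^sup>2 * b \<le> 1/2" using c1 by linarith
  show ?thesis using X t0 c1' by blast
qed

lemma (in prob_space) tail_j:
  fixes X :: "'a \<Rightarrow> nat \<Rightarrow> nat \<Rightarrow> real" and eps :: "nat \<Rightarrow> 'a \<Rightarrow> real"
    and a b L sX \<sigma> :: real
  assumes meas: "\<forall>r j. (\<lambda>\<omega>. X \<omega> r j) \<in> borel_measurable M"
    and dist: "\<forall>r<n. distributed M lborel (eps r) (\<lambda>x. ennreal (normal_density 0 \<sigma> x))" and sp: "\<sigma> > 0"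
    and ind: "indep_vars (\<lambda>_. borel) eps {..<n}"
    and prodeq: "distr M (PiM {..<n} (\<lambda>_. borel)) (\<lambda>\<omega>. \<lambda>r\<in>{..<n}. eps r \<omega>)
           \<Otimes>\<^sub>M distr M (PiM {..<n} (\<lambda>_. PiM J (\<lambda>_. borel))) (\<lambda>\<omega>. \<lambda>r\<in>{..<n}. \<lambda>j\<in>J. X \<omega> r j)
         = distr M (PiM {..<n} (\<lambda>_. borel) \<Otimes>\<^sub>M PiM {..<n} (\<lambda>_. PiM J (\<lambda>_. borel)))
             (\<lambda>\<omega>. (\<lambda>r\<in>{..<n}. eps r \<omega>, \<lambda>r\<in>{..<n}. \<lambda>j\<in>J. X \<omega> r j))"
    and rind: "indep_vars (\<lambda>_. PiM J (\<lambda>_. borel)) (\<lambda>r \<omega>. \<lambda>j\<in>J. X \<omega> r j) {..<n}"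
    and jJ: "j \<in> J"
    and subg: "\<forall>r<n. \<forall>\<tau>. (\<integral>\<^sup>+\<omega>. ennreal (exp (\<tau> * X \<omega> r j)) \<partial>M) \<le> ennreal (exp (\<tau>\<^sup>2 * sX\<^sup>2 / 2))"
    and b: "b = sX\<^sup>2 * \<sigma>\<^sup>2" "b > 0"
    and a: "a > 0" "L \<ge> 0" "a\<^sup>2 \<ge> 8 * b * n * L" "n \<ge> 4 * L" and n1: "n \<ge> 1"
  shows "prob {\<omega>\<in>space M. \<bar>\<Sum>r<n. X \<omega> r j * eps r \<omega>\<bar> > a} \<le> 2 * exp (- 2 * L)"
proof -
  have npos: "real n > 0" using n1 by simp
  obtain \<tau> where tau: "\<tau> \<ge> 0" "\<tau>\<^sup>2 * b \<le> 1/2" "- \<tau> * a + n * (\<tau>\<^sup>2 * b) \<le> - 2 * L"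
    using choose_tau[OF a(1) npos b(2) a(2) a(3) a(4)] by blast
  define Sj where "Sj \<omega> = (\<Sum>r<n. X \<omega> r j * eps r \<omega>)" for \<omega>
  have eps_meas: "eps r \<in> borel_measurable M" if "r < n" for r
    using distributed_measurable[OF dist[rule_format, OF that]] by simp
  have Sj_meas: "Sj \<in> borel_measurable M"
    unfolding Sj_def using meas eps_meas by (intro borel_measurable_sum borel_measurable_times) auto
  have tb: "2 * (t\<^sup>2 * sX\<^sup>2 / 2) * \<sigma>\<^sup>2 \<le> 1/2" if "t\<^sup>2 = \<tau>\<^sup>2" for t
    using tau(2) that b by (simp add: algebra_simps)
  have eqe: "real n * (2 * (t\<^sup>2 * sX\<^sup>2 / 2) * \<sigma>\<^sup>2) = n * (\<tau>\<^sup>2 * b)" if "t\<^sup>2 = \<tau>\<^sup>2" for t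
    using that b by (simp add: algebra_simps)
  have m1: "(\<integral>\<^sup>+\<omega>. ennreal (exp (\<tau> * Sj \<omega>)) \<partial>M) \<le> ennreal (exp (n * (\<tau>\<^sup>2 * b)))"
    using cross_mgf[OF meas dist sp ind prodeq rind jJ subg tb[of \<tau>, OF refl]] unfolding Sj_def eqe[of \<tau>, OF refl] .
  have m2: "(\<integral>\<^sup>+\<omega>. ennreal (exp (\<tau> * (- Sj \<omega>))) \<partial>M) \<le> ennreal (exp (n * (\<tau>\<^sup>2 * b)))"
    using cross_mgf[OF meas dist sp ind prodeq rind jJ subg tb[of "- \<tau>"]] unfolding Sj_def b(1) by (simp add: mult.assoc)
  have p1: "prob {\<omega>\<in>space M. Sj \<omega> \<ge> a} \<le> exp (- 2 * L)"
  proof -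
    have "prob {\<omega>\<in>space M. Sj \<omega> \<ge> a} \<le> exp (- \<tau> * a) * exp (n * (\<tau>\<^sup>2 * b))"
      by (rule chernoff[OF Sj_meas tau(1) m1])
    also have "\<dots> = exp (- \<tau> * a + n * (\<tau>\<^sup>2 * b))" by (simp only: exp_add)
    also have "\<dots> \<le> exp (- 2 * L)" using tau(3) by simp
    finally show ?thesis .
  qed
  have p2: "prob {\<omega>\<in>space M. - Sj \<omega> \<ge> a} \<le> exp (- 2 * L)"
  proof -
    have "prob {\<omega>\<in>space M. - Sj \<omega> \<ge> a} \<le> exp (- \<tau> * a) * exp (n * (\<tau>\<^sup>2 * b))"
      by (rule chernoff[OF _ tau(1) m2]) (use Sj_meas in measurable)
    also have "\<dots> = exp (- \<tau> * a + n * (\<tau>\<^sup>2 * b))" by (simp only: exp_add)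
    also have "\<dots> \<le> exp (- 2 * L)" using tau(3) by simp
    finally show ?thesis .
  qed
  have s1: "{\<omega>\<in>space M. Sj \<omega> \<ge> a} \<in> sets M" using Sj_meas by measurable
  have s2: "{\<omega>\<in>space M. - Sj \<omega> \<ge> a} \<in> sets M" using Sj_meas by measurable
  have "prob {\<omega>\<in>space M. \<bar>Sj \<omega>\<bar> > a} \<le> prob ({\<omega>\<in>space M. Sj \<omega> \<ge> a} \<union> {\<omega>\<in>space M. - Sj \<omega> \<ge> a})"
    by (rule finite_measure_mono) (use s1 s2 in auto)
  also have "\<dots> \<le> prob {\<omega>\<in>space M. Sj \<omega> \<ge> a} + prob {\<omega>\<in>space M. - Sj \<omega> \<ge> a}"
    by (rule measure_Un_le[OF s1 s2])
  also have "\<dots> \<le> 2 * exp (- 2 * L)" using p1 p2 by simp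
  finally show ?thesis unfolding Sj_def .
qed



lemma W_A:
  fixes x :: "nat \<Rightarrow> nat \<Rightarrow> real" and e d :: "nat \<Rightarrow> real"
  assumes "\<forall>j\<in>J. \<bar>\<Sum>r<n. x r j * e r\<bar> \<le> h"
  shows "(\<Sum>r<n. e r * (\<Sum>j\<in>J. x r j * d j)) \<le> h * (\<Sum>j\<in>J. \<bar>d j\<bar>)"
proof -
  have "(\<Sum>r<n. e r * (\<Sum>j\<in>J. x r j * d j)) = (\<Sum>j\<in>J. d j * (\<Sum>r<n. x r j * e r))"
    by (simp add: sum_distrib_left sum.swap[of _ "{..<n}"] algebra_simps)
  also have "\<dots> \<le> (\<Sum>j\<in>J. \<bar>d j\<bar> * h)"
  proof (rule sum_mono)
    fix j assume "j \<in> J"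
    have "d j * (\<Sum>r<n. x r j * e r) \<le> \<bar>d j * (\<Sum>r<n. x r j * e r)\<bar>" by simp
    also have "\<dots> = \<bar>d j\<bar> * \<bar>\<Sum>r<n. x r j * e r\<bar>" by (simp add: abs_mult)
    also have "\<dots> \<le> \<bar>d j\<bar> * h" using assms \<open>j \<in> J\<close> by (intro mult_left_mono) auto
    finally show "d j * (\<Sum>r<n. x r j * e r) \<le> \<bar>d j\<bar> * h" .
  qed
  also have "\<dots> = h * (\<Sum>j\<in>J. \<bar>d j\<bar>)" by (simp add: sum_distrib_left mult.commute)
  finally show ?thesis .
qed

lemma W_B:
  fixes e z :: "nat \<Rightarrow> real"
  shows "(\<Sum>r<n. e r * z r) \<le> (\<Sum>r<n. (z r)\<^sup>2) / 4 + (\<Sum>r<n. (e r)\<^sup>2)"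
proof -
  have "(\<Sum>r<n. e r * z r) \<le> (\<Sum>r<n. (z r)\<^sup>2 / 4 + (e r)\<^sup>2)"
  proof (rule sum_mono)
    fix r
    have "0 \<le> (z r / 2 - e r)\<^sup>2" by simp
    then show "e r * z r \<le> (z r)\<^sup>2 / 4 + (e r)\<^sup>2" by (simp add: power2_eq_square algebra_simps)
  qed
  also have "\<dots> = (\<Sum>r<n. (z r)\<^sup>2) / 4 + (\<Sum>r<n. (e r)\<^sup>2)" by (simp add: sum.distrib sum_divide_distrib)
  finally show ?thesis .
qed

lemma (in prob_space) subg_row:
  fixes X :: "'a \<Rightarrow> nat \<Rightarrow> nat \<Rightarrow> real"
  assumes finJ: "finite J" and jJ: "j \<in> J"
    and meas: "\<forall>r j. (\<lambda>\<omega>. X \<omega> r j) \<in> borel_measurable M"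
    and hyp: "\<forall>v t. (\<Sum>j\<in>J. (v j)\<^sup>2) = 1 \<longrightarrow>
             (\<integral>\<^sup>+ \<omega>. ennreal (exp (t * (\<Sum>j\<in>J. X \<omega> 0 j * v j))) \<partial>M) \<le> ennreal (exp (t\<^sup>2 * sX\<^sup>2 / 2))"
    and deq: "\<forall>r<n. distr M (PiM J (\<lambda>_. borel)) (\<lambda>\<omega>. \<lambda>j\<in>J. X \<omega> r j) = distr M (PiM J (\<lambda>_. borel)) (\<lambda>\<omega>. \<lambda>j\<in>J. X \<omega> 0 j)"
  shows "\<forall>r<n. \<forall>\<tau>. (\<integral>\<^sup>+\<omega>. ennreal (exp (\<tau> * X \<omega> r j)) \<partial>M) \<le> ennreal (exp (\<tau>\<^sup>2 * sX\<^sup>2 / 2))"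
proof (intro allI impI)
  fix r \<tau> assume r: "r < n"
  define v where "v k = (if k = j then 1 else 0 :: real)" for k
  have v1: "(\<Sum>k\<in>J. (v k)\<^sup>2) = 1"
  proof -
    have "(\<Sum>k\<in>J. (v k)\<^sup>2) = (\<Sum>k\<in>J. if k = j then 1 else 0)"
      by (rule sum.cong) (auto simp: v_def)
    also have "\<dots> = 1" using finJ jJ by (subst sum.delta) auto
    finally show ?thesis .
  qed
  have v2: "(\<Sum>k\<in>J. X \<omega> 0 k * v k) = X \<omega> 0 j" for \<omega>
  proof -
    have "(\<Sum>k\<in>J. X \<omega> 0 k * v k) = (\<Sum>k\<in>J. if k = j then X \<omega> 0 k else 0)"
      by (rule sum.cong) (auto simp: v_def)
    also have "\<dots> = X \<omega> 0 j" using finJ jJ by (subst sum.delta) auto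
    finally show ?thesis .
  qed
  have rm: "(\<lambda>\<omega>. \<lambda>j\<in>J. X \<omega> q j) \<in> measurable M (PiM J (\<lambda>_. borel))" for q
    using meas by (intro measurable_restrict) auto
  have hm: "(\<lambda>x. ennreal (exp (\<tau> * x j))) \<in> borel_measurable (PiM J (\<lambda>_. borel :: real measure))"
    using meas_row_fun[OF jJ] .
  have "(\<integral>\<^sup>+\<omega>. ennreal (exp (\<tau> * X \<omega> r j)) \<partial>M) = (\<integral>\<^sup>+x. ennreal (exp (\<tau> * x j)) \<partial>distr M (PiM J (\<lambda>_. borel)) (\<lambda>\<omega>. \<lambda>j\<in>J. X \<omega> r j))"
    using jJ by (subst nn_integral_distr[OF rm]) (simp_all add: hm)
  also have "\<dots> = (\<integral>\<^sup>+x. ennreal (exp (\<tau> * x j)) \<partial>distr M (PiM J (\<lambda>_. borel)) (\<lambda>\<omega>. \<lambda>j\<in>J. X \<omega> 0 j))"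
    by (subst deq[rule_format, OF r]) (rule refl)
  also have "\<dots> = (\<integral>\<^sup>+\<omega>. ennreal (exp (\<tau> * X \<omega> 0 j)) \<partial>M)"
    using jJ by (subst nn_integral_distr[OF rm]) (simp_all add: hm)
  also have "\<dots> = (\<integral>\<^sup>+\<omega>. ennreal (exp (\<tau> * (\<Sum>k\<in>J. X \<omega> 0 k * v k))) \<partial>M)" by (simp add: v2)
  also have "\<dots> \<le> ennreal (exp (\<tau>\<^sup>2 * sX\<^sup>2 / 2))" by (rule hyp[rule_format, OF v1])
  finally show "(\<integral>\<^sup>+\<omega>. ennreal (exp (\<tau> * X \<omega> r j)) \<partial>M) \<le> ennreal (exp (\<tau>\<^sup>2 * sX\<^sup>2 / 2))" .
qed

lemma (in prob_space) chi_tail: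
  fixes eps :: "nat \<Rightarrow> 'a \<Rightarrow> real" and Kii lp :: real
  assumes dist: "\<forall>r<n. distributed M lborel (eps r) (\<lambda>x. ennreal (normal_density 0 (sqrt (1 / Kii)) x))"
    and K: "Kii > 0"
    and ind: "indep_vars (\<lambda>_. borel) eps {..<n}"
    and nsmall: "real n < 4 * lp"
  shows "prob {\<omega>\<in>space M. (\<Sum>r<n. (eps r \<omega>)\<^sup>2) \<ge> 12 / Kii * lp} \<le> exp (- lp)"
proof -
  have sp: "sqrt (1 / Kii) > 0" using K by simp
  have s2: "(sqrt (1 / Kii))\<^sup>2 = 1 / Kii" using K by simp
  have eps_meas: "eps r \<in> borel_measurable M" if "r < n" for r
    using distributed_measurable[OF dist[rule_format, OF that]] by simp
  have Ym: "(\<lambda>\<omega>. \<Sum>r<n. (eps r \<omega>)\<^sup>2) \<in> borel_measurable M"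
    using eps_meas by (intro borel_measurable_sum borel_measurable_power) auto
  have mgf: "(\<integral>\<^sup>+\<omega>. ennreal (exp (Kii / 4 * (\<Sum>r<n. (eps r \<omega>)\<^sup>2))) \<partial>M) \<le> ennreal (exp (real n * (2 * (Kii / 4) * (sqrt (1 / Kii))\<^sup>2)))"
    by (rule chi_mgf[OF dist sp ind]) (use K s2 in auto)
  have "prob {\<omega>\<in>space M. (\<Sum>r<n. (eps r \<omega>)\<^sup>2) \<ge> 12 / Kii * lp} \<le> exp (- (Kii / 4) * (12 / Kii * lp)) * exp (real n * (2 * (Kii / 4) * (sqrt (1 / Kii))\<^sup>2))"
    by (rule chernoff[OF Ym _ mgf]) (use K in simp)
  also have "\<dots> = exp (- 3 * lp + real n / 2)" using K s2 by (simp add: exp_add[symmetric] field_simps)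
  also have "\<dots> \<le> exp (- lp)" using nsmall by simp
  finally show ?thesis .
qed




lemma det_conclusion:
  fixes x :: "nat \<Rightarrow> nat \<Rightarrow> real" and bh bs pw :: "nat \<Rightarrow> real" and \<xi> s1 Kii B \<phi> :: real
  assumes opt: "enet_obj n p i Kii \<xi> s1 pw x bh \<le> enet_obj n p i Kii \<xi> s1 pw x bs"
    and pos: "Kii > 0" "\<xi> > 0" "s1 > 0" "\<xi> \<ge> B * Kii / s1\<^sup>2"
    and bnd: "\<forall>j\<in>supp_set p i bs. \<bar>bs j\<bar> \<le> B"
    and pw01: "\<forall>j\<in>other_idx p i. 0 \<le> pw j \<and> pw j \<le> 1"
    and puJ: "\<forall>j\<in>other_idx p i - supp_set p i bs. pw j \<le> pu"
    and pu: "0 \<le> pu" "pu < 1/2" and pl: "pl \<le> 1"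
    and n1: "n \<ge> 1" and s1c: "card (supp_set p i bs) \<ge> 1" and phi: "\<phi> > 0"
    and compat: "\<forall>\<delta>. (\<Sum>j\<in>other_idx p i - supp_set p i bs. \<bar>\<delta> j\<bar>) \<le> (5 - 2 * pl) / (1 - 2 * pu) * (\<Sum>j\<in>supp_set p i bs. \<bar>\<delta> j\<bar>) \<longrightarrow>
             (\<Sum>r<n. (\<Sum>j\<in>other_idx p i. x r j * \<delta> j)\<^sup>2) \<ge> real n * \<phi>\<^sup>2 / real (card (supp_set p i bs)) * (\<Sum>j\<in>supp_set p i bs. \<bar>\<delta> j\<bar>)\<^sup>2"
    and ev: "(\<forall>j\<in>other_idx p i. \<bar>\<Sum>r<n. x r j * (x r i - (\<Sum>k\<in>other_idx p i. x r k * bs k))\<bar> \<le> \<xi> / 2)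
          \<or> (\<Sum>r<n. (x r i - (\<Sum>k\<in>other_idx p i. x r k * bs k))\<^sup>2) \<le> \<xi>\<^sup>2 / real n"
  shows "(\<Sum>j\<in>other_idx p i. \<bar>bh j - bs j\<bar>) \<le> FF \<phi> pl pu * real (card (supp_set p i bs)) * \<xi> / real n"
proof -
  define J where "J = other_idx p i"
  define S where "S = supp_set p i bs"
  define Q where "Q = (\<Sum>r<n. (\<Sum>j\<in>J. x r j * (bh j - bs j))\<^sup>2)"
  define W where "W = (\<Sum>r<n. (x r i - (\<Sum>j\<in>J. x r j * bs j)) * (\<Sum>j\<in>J. x r j * (bh j - bs j)))"
  define DS where "DS = (\<Sum>j\<in>S. \<bar>bh j - bs j\<bar>)"
  define Dc where "Dc = (\<Sum>j\<in>J - S. \<bar>bh j - bs j\<bar>)"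
  have finJ: "finite J" unfolding J_def other_idx_def by auto
  have SJ: "S \<subseteq> J" unfolding S_def J_def supp_set_def by auto
  have bi: "Q / 2 \<le> W + \<xi> * DS - \<xi> * (1 - pu) * Dc"
    using basic_ineq[OF opt pos bnd pw01 puJ] unfolding Q_def W_def DS_def Dc_def J_def S_def .
  have Q0: "Q \<ge> 0" unfolding Q_def by (intro sum_nonneg) auto
  have DS0: "DS \<ge> 0" unfolding DS_def by (intro sum_nonneg) auto
  have Dc0: "Dc \<ge> 0" unfolding Dc_def by (intro sum_nonneg) auto
  have cmp: "Dc \<le> (5 - 2 * pl) / (1 - 2 * pu) * DS \<Longrightarrow> Q \<ge> real n * \<phi>\<^sup>2 / real (card S) * DS\<^sup>2"
    using compat[rule_format, of "\<lambda>j. bh j - bs j"] unfolding Q_def DS_def Dc_def J_def S_def by blast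
  have split: "(\<Sum>j\<in>J. \<bar>bh j - bs j\<bar>) = DS + Dc"
    unfolding DS_def Dc_def using sum.subset_diff[OF SJ finJ, of "\<lambda>j. \<bar>bh j - bs j\<bar>"] by simp
  have nr: "real n > 0" using n1 by simp
  have sr: "real (card S) \<ge> 1" using s1c unfolding S_def by simp
  from ev show ?thesis
  proof
    assume A: "\<forall>j\<in>other_idx p i. \<bar>\<Sum>r<n. x r j * (x r i - (\<Sum>k\<in>other_idx p i. x r k * bs k))\<bar> \<le> \<xi> / 2"
    have "W \<le> \<xi> / 2 * (\<Sum>j\<in>J. \<bar>bh j - bs j\<bar>)"
      unfolding W_def using W_A[where J=J and n=n and x=x and e="\<lambda>r. x r i - (\<Sum>k\<in>J. x r k * bs k)" and h="\<xi> / 2" and d="\<lambda>j. bh j - bs j"] A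
      unfolding J_def by blast
    then have WA: "W \<le> \<xi> / 2 * (DS + Dc)" unfolding split .
    have "DS + Dc \<le> FF \<phi> pl pu * real (card S) * \<xi> / real n"
      by (rule final_A[OF Q0 bi WA DS0 Dc0 pu(2) pl cmp nr sr phi pos(2)])
    then show ?thesis unfolding split[symmetric] J_def S_def .
  next
    assume B: "(\<Sum>r<n. (x r i - (\<Sum>k\<in>other_idx p i. x r k * bs k))\<^sup>2) \<le> \<xi>\<^sup>2 / real n"
    have "W \<le> Q / 4 + (\<Sum>r<n. (x r i - (\<Sum>k\<in>J. x r k * bs k))\<^sup>2)"
      unfolding W_def Q_def by (rule W_B)
    then have WB: "W \<le> Q / 4 + (\<Sum>r<n. (x r i - (\<Sum>k\<in>J. x r k * bs k))\<^sup>2)" .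
    have "DS + Dc \<le> FF \<phi> pl pu * real (card S) * \<xi> / real n"
      by (rule final_B[OF Q0 bi WB _ DS0 Dc0 pu(2) pu(1) pl cmp nr sr phi pos(2)]) (use B J_def in simp)
    then show ?thesis unfolding split[symmetric] J_def S_def .
  qed
qed



definition CCc :: "real \<Rightarrow> real \<Rightarrow> real" where
  "CCc sX K = sqrt (32 * (sX\<^sup>2 * (sqrt (1 / K))\<^sup>2) + 12 / K)"

lemma CCc_pos: "sX > 0 \<Longrightarrow> K > 0 \<Longrightarrow> CCc sX K > 0"
  unfolding CCc_def by (intro real_sqrt_gt_zero add_nonneg_pos) auto

lemma CCc_sq: "sX > 0 \<Longrightarrow> K > 0 \<Longrightarrow> (CCc sX K)\<^sup>2 = 32 * (sX\<^sup>2 * (sqrt (1 / K))\<^sup>2) + 12 / K"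
  unfolding CCc_def by (subst real_sqrt_pow2) auto

lemma xi_sq:
  fixes C xi n L :: real
  assumes "C > 0" "n \<ge> 0" "L \<ge> 0" "xi \<ge> C * sqrt (n * L)"
  shows "xi\<^sup>2 \<ge> C\<^sup>2 * (n * L)"
proof -
  have "0 \<le> C * sqrt (n * L)" using assms by simp
  then have "(C * sqrt (n * L))\<^sup>2 \<le> xi\<^sup>2" using assms by (intro power_mono) auto
  then show ?thesis using assms by (simp add: power_mult_distrib)
qed

lemma exp_m2ln: "(p::real) > 0 \<Longrightarrow> exp (- 2 * ln p) = 1 / p\<^sup>2"
proof -
  assume p: "p > 0"
  have "exp (2 * ln p) = p\<^sup>2"
    apply (subst mult_2) apply (subst exp_add) using p by (simp add: power2_eq_square)
  then show ?thesis by (simp add: exp_minus field_simps)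
qed

theorem theorem1:
  "\<exists>F :: real \<Rightarrow> real \<Rightarrow> real \<Rightarrow> real. (\<forall>a b d. F a b d > 0) \<and>
   (\<forall>(\<sigma>X::real) (\<kappa>lo::real) (\<kappa>hi::real) (B::real) (\<phi>::real) (Kii::real).
     \<sigma>X > 0 \<and> \<kappa>lo > 0 \<and> \<kappa>lo \<le> \<kappa>hi \<and> B > 0 \<and> \<phi> > 0 \<and> Kii > 0 \<longrightarrow>
     (\<exists>C::real. C > 0 \<and> (\<exists>c::real. c > 0 \<and>
       (\<forall>(n::nat) (p::nat) (i::nat) (M::'a measure) (X::'a \<Rightarrow> nat \<Rightarrow> nat \<Rightarrow> real)
          (\<beta>star::nat \<Rightarrow> real) (Sig::nat \<Rightarrow> nat \<Rightarrow> real) (pw::nat \<Rightarrow> real) (\<sigma>1::real) (\<xi>0::real).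
         let J = other_idx p i;
             S = supp_set p i \<beta>star;
             s = card S;
             pu = pbar p i \<beta>star pw;
             pl = plow p i \<beta>star pw;
             L = (5 - 2 * pl) / (1 - 2 * pu);
             eps = (\<lambda>r \<omega>. X \<omega> r i - (\<Sum>j\<in>J. X \<omega> r j * \<beta>star j));
             row = (\<lambda>r \<omega>. \<lambda>j\<in>J. X \<omega> r j)
         in
         n \<ge> 1 \<and> p \<ge> 3 \<and> i < p \<and> prob_space M \<and>
         (\<forall>r j. (\<lambda>\<omega>. X \<omega> r j) \<in> borel_measurable M) \<and>
         \<comment> \<open>nodewise Gaussian regression model, noise independent of the design\<close>
         (\<forall>r<n. distributed M lborel (eps r) (normal_density 0 (sqrt (1 / Kii)))) \<and>
         prob_space.indep_vars M (\<lambda>_. borel) eps {..<n} \<and>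
         distr M (PiM {..<n} (\<lambda>_. borel)) (\<lambda>\<omega>. \<lambda>r\<in>{..<n}. eps r \<omega>)
           \<Otimes>\<^sub>M distr M (PiM {..<n} (\<lambda>_. PiM J (\<lambda>_. borel))) (\<lambda>\<omega>. \<lambda>r\<in>{..<n}. row r \<omega>)
         = distr M (PiM {..<n} (\<lambda>_. borel) \<Otimes>\<^sub>M PiM {..<n} (\<lambda>_. PiM J (\<lambda>_. borel)))
             (\<lambda>\<omega>. (\<lambda>r\<in>{..<n}. eps r \<omega>, \<lambda>r\<in>{..<n}. row r \<omega>)) \<and>
         \<comment> \<open>(A1) i.i.d. centered sub-Gaussian rows with covariance Sig\<close>
         prob_space.indep_vars M (\<lambda>_. PiM J (\<lambda>_. borel)) row {..<n} \<and>
         (\<forall>r<n. distr M (PiM J (\<lambda>_. borel)) (row r) = distr M (PiM J (\<lambda>_. borel)) (row 0)) \<and>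
         (\<forall>r<n. \<forall>j\<in>J. integrable M (\<lambda>\<omega>. X \<omega> r j) \<and> prob_space.expectation M (\<lambda>\<omega>. X \<omega> r j) = 0) \<and>
         (\<forall>j\<in>J. \<forall>k\<in>J. integrable M (\<lambda>\<omega>. X \<omega> 0 j * X \<omega> 0 k) \<and>
             Sig j k = prob_space.expectation M (\<lambda>\<omega>. X \<omega> 0 j * X \<omega> 0 k)) \<and>
         (\<forall>v t. (\<Sum>j\<in>J. (v j)\<^sup>2) = 1 \<longrightarrow>
             (\<integral>\<^sup>+ \<omega>. ennreal (exp (t * (\<Sum>j\<in>J. X \<omega> 0 j * v j))) \<partial>M)
               \<le> ennreal (exp (t\<^sup>2 * \<sigma>X\<^sup>2 / 2))) \<and>
         (\<forall>lam. is_eigenvalue_on J Sig lam \<longrightarrow> \<kappa>lo \<le> lam \<and> lam \<le> \<kappa>hi) \<and>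
         \<comment> \<open>(A2) sparsity and bounded signal\<close>
         S \<noteq> {} \<and> (\<forall>j\<in>S. \<bar>\<beta>star j\<bar> \<le> B) \<and>
         \<comment> \<open>weights and hyperparameters\<close>
         (\<forall>j\<in>J. 0 \<le> pw j \<and> pw j \<le> 1) \<and> \<sigma>1 > 0 \<and> \<xi>0 > 0 \<and>
         \<comment> \<open>(A3) separation of weights\<close>
         pu < 1 / 2 \<and>
         \<comment> \<open>(A4) compatibility condition (almost surely)\<close>
         (AE \<omega> in M. \<forall>\<delta>. (\<Sum>j\<in>J - S. \<bar>\<delta> j\<bar>) \<le> L * (\<Sum>j\<in>S. \<bar>\<delta> j\<bar>) \<longrightarrow>
             (\<Sum>r<n. (\<Sum>j\<in>J. X \<omega> r j * \<delta> j)\<^sup>2) \<ge> real n * \<phi>\<^sup>2 / real s * (\<Sum>j\<in>S. \<bar>\<delta> j\<bar>)\<^sup>2) \<and>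
         \<comment> \<open>tuning conditions\<close>
         \<xi>0 \<ge> C * sqrt (real n * ln (real p)) \<and> \<xi>0 \<ge> B * Kii / \<sigma>1\<^sup>2
         \<longrightarrow>
         (\<exists>E\<in>sets M. measure M E \<ge> 1 - 2 * real p powr (- c) \<and>
            (\<forall>\<omega>\<in>E. \<forall>\<beta>hat. is_enet_estimator n p i Kii \<xi>0 \<sigma>1 pw (X \<omega>) \<beta>hat \<longrightarrow>
               (\<Sum>j\<in>J. \<bar>\<beta>hat j - \<beta>star j\<bar>) \<le> F \<phi> pl pu * real s * \<xi>0 / real n))))))"
  apply (rule exI[of _ FF])
  apply (intro conjI allI impI)
   apply (rule FF_pos)
  apply (elim conjE)
  subgoal for \<sigma>X \<kappa>lo \<kappa>hi B \<phi> Kii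
    apply (rule exI[of _ "CCc \<sigma>X Kii"])
    apply (intro conjI)
    subgoal by (rule CCc_pos)
    apply (rule exI[of _ 1])
    apply (intro conjI)
     apply simp
    apply (intro allI)
    apply (unfold Let_def)
    apply (intro impI)
    apply (elim conjE)
    subgoal premises prems for n p i M X \<beta>s Sig pw \<sigma>1 \<xi>0
    proof -
      let ?J = "other_idx p i" and ?S = "supp_set p i \<beta>s" and ?pu = "pbar p i \<beta>s pw" and ?pl = "plow p i \<beta>s pw"
      let ?eps = "\<lambda>r \<omega>. X \<omega> r i - (\<Sum>j\<in>other_idx p i. X \<omega> r j * \<beta>s j)"
      interpret P: prob_space M by (rule prems(10))
      have mX[measurable]: "\<And>r j. (\<lambda>\<omega>. X \<omega> r j) \<in> borel_measurable M" using prems(11) by blast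
      have finJ: "finite ?J" unfolding other_idx_def by auto
      have SJ: "?S \<subseteq> ?J" unfolding supp_set_def by auto
      have finS: "finite ?S" using finJ SJ finite_subset by blast
      have s1c: "card ?S \<ge> 1" using prems(21) finS by (simp add: Suc_le_eq card_gt_0_iff)
      have puJ: "\<forall>j\<in>?J - ?S. pw j \<le> ?pu"
      proof
        fix j assume j: "j \<in> ?J - ?S"
        then have ne: "?J - ?S \<noteq> {}" by blast
        have "pw j \<le> Max (pw ` (?J - ?S))" using finJ j by (intro Max_ge) auto
        then show "pw j \<le> ?pu" unfolding pbar_def using ne by simp
      qed
      have pu0: "0 \<le> ?pu"
      proof (cases "?J - ?S = {}")
        case True then show ?thesis unfolding pbar_def by simp
      next
        case False
        then obtain j where j: "j \<in> ?J - ?S" by blast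
        then have "0 \<le> pw j" using prems(23) by blast
        also have "pw j \<le> ?pu" using puJ j by blast
        finally show ?thesis .
      qed
      have pl1: "?pl \<le> 1"
      proof -
        obtain j where j: "j \<in> ?S" using prems(21) by blast
        have "?pl \<le> pw j" unfolding plow_def using finS j by (intro Min_le) auto
        also have "pw j \<le> 1" using prems(23) j SJ by blast
        finally show ?thesis .
      qed
      have p3: "real p \<ge> 3" using prems(8) by simp
      have lnp: "ln (real p) > 0" using p3 by simp
      have pinv: "real p powr - 1 = 1 / real p" using p3 by (simp add: powr_neg_one)
      obtain N where N: "\<And>\<omega>. \<omega> \<in> space M - N \<Longrightarrow>
          (\<forall>\<delta>. (\<Sum>j\<in>?J - ?S. \<bar>\<delta> j\<bar>) \<le> (5 - 2 * ?pl) / (1 - 2 * ?pu) * (\<Sum>j\<in>?S. \<bar>\<delta> j\<bar>) \<longrightarrow>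
             real n * \<phi>\<^sup>2 / real (card ?S) * (\<Sum>j\<in>?S. \<bar>\<delta> j\<bar>)\<^sup>2 \<le> (\<Sum>r<n. (\<Sum>j\<in>?J. X \<omega> r j * \<delta> j)\<^sup>2))"
        and Nnull: "N \<in> null_sets M"
        using AE_E3[OF prems(27)] by blast
      define CC where "CC = CCc \<sigma>X Kii"
      define bb where "bb = \<sigma>X\<^sup>2 * (sqrt (1 / Kii))\<^sup>2"
      have bbpos: "bb > 0" unfolding bb_def using prems(1,6) by simp
      have CC2: "CC\<^sup>2 = 32 * bb + 12 / Kii" unfolding CC_def bb_def using CCc_sq prems(1,6) by blast
      have xi2: "\<xi>0\<^sup>2 \<ge> CC\<^sup>2 * (real n * ln (real p))"
        using xi_sq[of CC "real n" "ln (real p)" \<xi>0] CCc_pos prems(1,6,28) lnp unfolding CC_def by auto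
      have nr: "real n > 0" using prems(7) by simp
      have detc: "(\<Sum>j\<in>?J. \<bar>bh j - \<beta>s j\<bar>) \<le> FF \<phi> ?pl ?pu * real (card ?S) * \<xi>0 / real n"
        if w: "\<omega> \<in> space M - N" and est: "is_enet_estimator n p i Kii \<xi>0 \<sigma>1 pw (X \<omega>) bh"
          and ev: "(\<forall>j\<in>?J. \<bar>\<Sum>r<n. X \<omega> r j * (X \<omega> r i - (\<Sum>k\<in>?J. X \<omega> r k * \<beta>s k))\<bar> \<le> \<xi>0 / 2)
             \<or> (\<Sum>r<n. (X \<omega> r i - (\<Sum>k\<in>?J. X \<omega> r k * \<beta>s k))\<^sup>2) \<le> \<xi>0\<^sup>2 / real n"
        for \<omega> bh
      proof -
        have opt: "enet_obj n p i Kii \<xi>0 \<sigma>1 pw (X \<omega>) bh \<le> enet_obj n p i Kii \<xi>0 \<sigma>1 pw (X \<omega>) \<beta>s"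
          using est unfolding is_enet_estimator_def by blast
        have cmp: "\<forall>\<delta>. (\<Sum>j\<in>?J - ?S. \<bar>\<delta> j\<bar>) \<le> (5 - 2 * ?pl) / (1 - 2 * ?pu) * (\<Sum>j\<in>?S. \<bar>\<delta> j\<bar>) \<longrightarrow>
             (\<Sum>r<n. (\<Sum>j\<in>?J. X \<omega> r j * \<delta> j)\<^sup>2) \<ge> real n * \<phi>\<^sup>2 / real (card ?S) * (\<Sum>j\<in>?S. \<bar>\<delta> j\<bar>)\<^sup>2"
          using N[OF w] by blast
        show ?thesis
          by (rule det_conclusion[OF opt prems(6) prems(25) prems(24) prems(29) prems(22) prems(23) puJ pu0 prems(26) pl1 prems(7) s1c prems(5) cmp ev])
      qed
      have cardJ: "real (card ?J) \<le> real p"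
      proof -
        have "card ?J \<le> card {..<p}" unfolding other_idx_def by (intro card_mono) auto
        then show ?thesis by simp
      qed
      have Nsets: "N \<in> sets M" using Nnull by auto
      show ?thesis
      proof (cases "real n \<ge> 4 * ln (real p)")
        case True
        define Bj where "Bj j = {\<omega>\<in>space M. \<xi>0 / 2 < \<bar>\<Sum>r<n. X \<omega> r j * ?eps r \<omega>\<bar>}" for j
        define E where "E = (space M - (\<Union>j\<in>?J. Bj j)) - N"
        have Bj_sets: "Bj j \<in> sets M" for j unfolding Bj_def by measurable
        have E_sets: "E \<in> sets M" unfolding E_def using Bj_sets Nsets finJ by auto
        have sp: "sqrt (1 / Kii) > 0" using prems(6) by simp
        have Bj_prob: "P.prob (Bj j) \<le> 2 * (1 / (real p)\<^sup>2)" if jJ: "j \<in> ?J" for j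
        proof -
          have subg: "\<forall>r<n. \<forall>\<tau>. (\<integral>\<^sup>+\<omega>. ennreal (exp (\<tau> * X \<omega> r j)) \<partial>M) \<le> ennreal (exp (\<tau>\<^sup>2 * \<sigma>X\<^sup>2 / 2))"
            by (rule P.subg_row[OF finJ jJ prems(11) prems(19) prems(16)])
          have a2: "(\<xi>0 / 2)\<^sup>2 \<ge> 8 * bb * real n * ln (real p)"
          proof -
            have "8 * bb * real n * ln (real p) \<le> CC\<^sup>2 * (real n * ln (real p)) / 4"
              unfolding CC2 using prems(6) nr lnp by (simp add: field_simps)
            also have "\<dots> \<le> \<xi>0\<^sup>2 / 4" using xi2 by simp
            finally show ?thesis by (simp add: power_divide)
          qed
          have "P.prob (Bj j) \<le> 2 * exp (- 2 * ln (real p))"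
            unfolding Bj_def
            by (rule P.tail_j[where eps = ?eps and \<sigma> = "sqrt (1 / Kii)" and sX = \<sigma>X and b = bb,
                  OF prems(11) prems(12) sp prems(13) prems(14) prems(15) jJ subg bb_def bbpos _ _ a2 True prems(7)])
               (use prems(25) lnp in auto)
          also have "\<dots> = 2 * (1 / (real p)\<^sup>2)" using p3 exp_m2ln[of "real p"] by simp
          finally show ?thesis .
        qed
        have "P.prob (\<Union>j\<in>?J. Bj j) \<le> (\<Sum>j\<in>?J. P.prob (Bj j))"
          by (rule measure_UNION_le[OF finJ]) (use Bj_sets in auto)
        also have "\<dots> \<le> (\<Sum>j\<in>?J. 2 * (1 / (real p)\<^sup>2))" by (rule sum_mono) (use Bj_prob in auto)
        also have "\<dots> = real (card ?J) * (2 * (1 / (real p)\<^sup>2))" by simp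
        also have "\<dots> \<le> real p * (2 * (1 / (real p)\<^sup>2))" using cardJ by (intro mult_right_mono) auto
        also have "\<dots> = 2 / real p" using p3 by (simp add: power2_eq_square field_simps)
        finally have Ub: "P.prob (\<Union>j\<in>?J. Bj j) \<le> 2 / real p" .
        have Usets: "(\<Union>j\<in>?J. Bj j) \<in> sets M" using Bj_sets finJ by auto
        have "P.prob E = P.prob (space M - (\<Union>j\<in>?J. Bj j))"
          unfolding E_def using Usets Nnull by (intro measure_Diff_null_set) auto
        also have "\<dots> = 1 - P.prob (\<Union>j\<in>?J. Bj j)" using Usets by (rule P.prob_compl)
        finally have mE: "1 - 2 * real p powr - 1 \<le> P.prob E" using Ub pinv by simp
        show ?thesis
        proof (intro bexI[of _ E] conjI ballI allI impI)
          show "E \<in> sets M" by (rule E_sets)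
          show "1 - 2 * real p powr - 1 \<le> P.prob E" by (rule mE)
          fix \<omega> bh assume w: "\<omega> \<in> E" and est: "is_enet_estimator n p i Kii \<xi>0 \<sigma>1 pw (X \<omega>) bh"
          have w': "\<omega> \<in> space M - N" using w unfolding E_def by auto
          have "\<forall>j\<in>?J. \<bar>\<Sum>r<n. X \<omega> r j * (X \<omega> r i - (\<Sum>k\<in>?J. X \<omega> r k * \<beta>s k))\<bar> \<le> \<xi>0 / 2"
            using w unfolding E_def Bj_def by auto
          then show "(\<Sum>j\<in>?J. \<bar>bh j - \<beta>s j\<bar>) \<le> FF \<phi> ?pl ?pu * real (card ?S) * \<xi>0 / real n"
            using detc[OF w' est] by blast
        qed
      next
        case False
        then have nB: "real n < 4 * ln (real p)" by simp
        define Bc where "Bc = {\<omega>\<in>space M. 12 / Kii * ln (real p) \<le> (\<Sum>r<n. (?eps r \<omega>)\<^sup>2)}"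
        define E where "E = (space M - Bc) - N"
        have Bc_sets: "Bc \<in> sets M" unfolding Bc_def by measurable
        have E_sets: "E \<in> sets M" unfolding E_def using Bc_sets Nsets by auto
        have "P.prob Bc \<le> exp (- ln (real p))"
          unfolding Bc_def by (rule P.chi_tail[where eps = ?eps, OF prems(12) prems(6) prems(13) nB])
        also have "\<dots> = 1 / real p" using p3 by (simp add: exp_minus inverse_eq_divide)
        finally have Bb: "P.prob Bc \<le> 1 / real p" .
        have "P.prob E = P.prob (space M - Bc)"
          unfolding E_def using Bc_sets Nnull by (intro measure_Diff_null_set) auto
        also have "\<dots> = 1 - P.prob Bc" using Bc_sets by (rule P.prob_compl)
        finally have "P.prob E \<ge> 1 - 1 / real p" using Bb by simp
        moreover have "1 - 2 * real p powr - 1 \<le> 1 - 1 / real p"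
        proof -
          have "1 / real p \<le> 2 / real p" using p3 by (intro divide_right_mono) auto
          then show ?thesis using pinv by simp
        qed
        ultimately have mE: "1 - 2 * real p powr - 1 \<le> P.prob E" by linarith
        have thr: "12 / Kii * ln (real p) \<le> \<xi>0\<^sup>2 / real n"
        proof -
          have "12 / Kii * ln (real p) * real n \<le> CC\<^sup>2 * (real n * ln (real p))"
            unfolding CC2 using prems(6) nr lnp bbpos by (simp add: field_simps)
          also have "\<dots> \<le> \<xi>0\<^sup>2" by (rule xi2)
          finally show ?thesis using nr by (simp add: field_simps)
        qed
        show ?thesis
        proof (intro bexI[of _ E] conjI ballI allI impI)
          show "E \<in> sets M" by (rule E_sets)
          show "1 - 2 * real p powr - 1 \<le> P.prob E" by (rule mE)
          fix \<omega> bh assume w: "\<omega> \<in> E" and est: "is_enet_estimator n p i Kii \<xi>0 \<sigma>1 pw (X \<omega>) bh"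
          have w': "\<omega> \<in> space M - N" using w unfolding E_def by auto
          have "(\<Sum>r<n. (X \<omega> r i - (\<Sum>k\<in>?J. X \<omega> r k * \<beta>s k))\<^sup>2) < 12 / Kii * ln (real p)"
            using w unfolding E_def Bc_def by auto
          then have "(\<Sum>r<n. (X \<omega> r i - (\<Sum>k\<in>?J. X \<omega> r k * \<beta>s k))\<^sup>2) \<le> \<xi>0\<^sup>2 / real n"
            using thr by linarith
          then show "(\<Sum>j\<in>?J. \<bar>bh j - \<beta>s j\<bar>) \<le> FF \<phi> ?pl ?pu * real (card ?S) * \<xi>0 / real n"
            using detc[OF w' est] by blast
        qed
      qed
    qed
    done
  done


end
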